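(* Let $(\mathcal C,\mathbb E,\mathfrak s)$ be an extriangulated category and $\mathcal D$ a class of objects of $\mathcal C$. For $A,C\in\mathcal C$ let $\mathbb I_{\mathcal D}(C,A)$ be the set of $\delta\in\mathbb E(C,A)$ whose realisation $A\xrightarrow{x}B\xrightarrow{y}C$ has $x$ $\mathcal D$-monic, $\mathbb P_{\mathcal D}(C,A)$ the set of those with $y$ $\mathcal D$-epic, and $\mathbb D_{\mathcal D}=\mathbb I_{\mathcal D}\cap\mathbb P_{\mathcal D}$. Then $(\mathbb I_{\mathcal D},\mathfrak s|_{\mathbb I_{\mathcal D}})$, $(\mathbb P_{\mathcal D},\mathfrak s|_{\mathbb P_{\mathcal D}})$ and $(\mathbb D_{\mathcal D},\mathfrak s|_{\mathbb D_{\mathcal D}})$ are external triangulations of $\mathcal C$, and $\mathcal D\subseteq\mathsf{Inj}_{\mathbb I_{\mathcal D}}\mathcal C\subseteq\mathsf{Inj}_{\mathbb D_{\mathcal D}}\mathcal C$ and $\mathcal D\subseteq\mathsf{Proj}_{\mathbb P_{\mathcal D}}\mathcal C\subseteq\mathsf{Proj}_{\mathbb D_{\mathcal D}}\mathcal C$. Suppose moreover that $\mathcal D$ is closed under (arbitrary existing) direct sums and direct summands. Then: (a) if $\mathcal D$ is covariantly finite and all left $\mathcal D$-approximations are $\mathbb E$-inflations, then $\mathcal D=\mathsf{Inj}_{\mathbb I_{\mathcal D}}\mathcal C$ and $\mathcal C$ has enough $\mathbb I_{\mathcal D}$-injectives; (b) if $\mathcal D$ is contravariantly finite and all right $\mathcal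 D$-approximations are $\mathbb E$-deflations, then $\mathcal D=\mathsf{Proj}_{\mathbb P_{\mathcal D}}\mathcal C$ and $\mathcal C$ has enough $\mathbb P_{\mathcal D}$-projectives; (c) if $\mathcal D$ is functorially finite, left (resp. right) $\mathcal D$-approximations are $\mathbb E$-inflations (resp. $\mathbb E$-deflations), and the cones (resp. co-cones) in the corresponding extriangles of left (resp. right) $\mathcal D$-approximations are $\mathcal D$-epic (resp. $\mathcal D$-monic), then $\mathcal D=\mathsf{Inj}_{\mathbb D_{\mathcal D}}\mathcal C=\mathsf{Proj}_{\mathbb D_{\mathcal D}}\mathcal C$ and $\mathcal C$ has enough $\mathbb D_{\mathcal D}$-injectives and enough $\mathbb D_{\mathcal D}$-projectives.
   Context: All categories are additive and idempotent complete. Extriangulated categories $(\mathcal C,\mathbb E,\mathfrak s)$ are in the sense of Nakaoka–Palu ($\mathbb E$ an additive bifunctor $\mathcal C^{op}\times\mathcal C\to\mathsf{Ab}$, $\mathfrak s(\delta)=[A\xrightarrow{x}B\xrightarrow{y}C]$ its realisation, axioms (ET1)–(ET4)$^{op}$); $x$ is called an $\mathbb E$-inflation, $y$ an $\mathbb E$-deflation, and $y$ is the cone of $x$, $x$ the co-cone of $y$. An external triangulation of $\mathcal C$ is a pair $(\mathbb F,\mathfrak t)$ making $(\mathcal C,\mathbb F,\mathfrak t)$ extriangulated; here $\mathbb I_{\mathcal D}$ etc. are subfunctors of $\mathbb E$. For an external triangulation $\mathbb F$, $\mathsf{Inj}_{\mathbb F}\mathcal C$ is the class of $I$ with $\mathbb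 F(-,I)=0$ and $\mathsf{Proj}_{\mathbb F}\mathcal C$ the class of $P$ with $\mathbb F(P,-)=0$; enough injectives means every $A$ has an $\mathbb F$-extriangle $A\to I\to C\dashrightarrow$ with $I$ injective (dually for projectives). A morphism $f:A\to B$ is $\mathcal D$-monic if every morphism $A\to D$, $D\in\mathcal D$, factors through $f$; $\mathcal D$-epic if every morphism $D\to B$, $D\in\mathcal D$, factors through $f$. A left (right) $\mathcal D$-approximation of $A$ is a $\mathcal D$-monic $A\to D$ ($\mathcal D$-epic $D\to A$) with $D\in\mathcal D$; covariantly (contravariantly) finite means every object has a left (right) $\mathcal D$-approximation; functorially finite means both. Whether the inflation of a realisation of $\delta$ is $\mathcal D$-monic does not depend on the chosen representative. *)

theory Defs
  imports Main
begin

text \<open>Cmp g f is the composite g o f.  Ext C A is the abelian group E(C,A), with operations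
  Eadd C A, Eneg C A, Ezero C A.  Pull c A is E(c,A) (written c^* ) and Push C a is
  E(C,a) (written a_* ).  Rlz C A delta x y means that the sequence A -x-> B -y-> C
  belongs to the class s(delta).\<close>

record ('o,'m,'e) extcat =
  Ob :: "'o set"
  Mor :: "'m set"
  Dom :: "'m \<Rightarrow> 'o"
  Cod :: "'m \<Rightarrow> 'o"
  Cmp :: "'m \<Rightarrow> 'm \<Rightarrow> 'm"
  Idm :: "'o \<Rightarrow> 'm"
  Madd :: "'m \<Rightarrow> 'm \<Rightarrow> 'm"
  Mneg :: "'m \<Rightarrow> 'm"
  Mzero :: "'o \<Rightarrow> 'o \<Rightarrow> 'm"
  Ext :: "'o \<Rightarrow> 'o \<Rightarrow> 'e set"
  Eadd :: "'o \<Rightarrow> 'o \<Rightarrow> 'e \<Rightarrow> 'e \<Rightarrow> 'e"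
  Eneg :: "'o \<Rightarrow> 'o \<Rightarrow> 'e \<Rightarrow> 'e"
  Ezero :: "'o \<Rightarrow> 'o \<Rightarrow> 'e"
  Pull :: "'m \<Rightarrow> 'o \<Rightarrow> 'e \<Rightarrow> 'e"
  Push :: "'o \<Rightarrow> 'm \<Rightarrow> 'e \<Rightarrow> 'e"
  Rlz :: "'o \<Rightarrow> 'o \<Rightarrow> 'e \<Rightarrow> 'm \<Rightarrow> 'm \<Rightarrow> bool"

definition Hom :: "('o,'m,'e,'z) extcat_scheme \<Rightarrow> 'o \<Rightarrow> 'o \<Rightarrow> 'm set" where
  "Hom X A B = {f \<in> Mor X. Dom X f = A \<and> Cod X f = B}"

definition is_category :: "('o,'m,'e,'z) extcat_scheme \<Rightarrow> bool" where
  "is_category X \<longleftrightarrow>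
     (\<forall>f\<in>Mor X. Dom X f \<in> Ob X \<and> Cod X f \<in> Ob X) \<and>
     (\<forall>A\<in>Ob X. Idm X A \<in> Hom X A A) \<and>
     (\<forall>A B C f g. f \<in> Hom X A B \<longrightarrow> g \<in> Hom X B C \<longrightarrow> Cmp X g f \<in> Hom X A C) \<and>
     (\<forall>A B C D f g h. f \<in> Hom X A B \<longrightarrow> g \<in> Hom X B C \<longrightarrow> h \<in> Hom X C D \<longrightarrow>
        Cmp X h (Cmp X g f) = Cmp X (Cmp X h g) f) \<and>
     (\<forall>A B f. f \<in> Hom X A B \<longrightarrow> Cmp X f (Idm X A) = f \<and> Cmp X (Idm X B) f = f)"

definition is_preadditive :: "('o,'m,'e,'z) extcat_scheme \<Rightarrow> bool" where
  "is_preadditive X \<longleftrightarrow> is_category X \<and>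
     (\<forall>A\<in>Ob X. \<forall>B\<in>Ob X.
        Mzero X A B \<in> Hom X A B \<and>
        (\<forall>f\<in>Hom X A B. \<forall>g\<in>Hom X A B. Madd X f g \<in> Hom X A B) \<and>
        (\<forall>f\<in>Hom X A B. Mneg X f \<in> Hom X A B) \<and>
        (\<forall>f\<in>Hom X A B. \<forall>g\<in>Hom X A B. \<forall>h\<in>Hom X A B.
            Madd X (Madd X f g) h = Madd X f (Madd X g h)) \<and>
        (\<forall>f\<in>Hom X A B. \<forall>g\<in>Hom X A B. Madd X f g = Madd X g f) \<and>
        (\<forall>f\<in>Hom X A B. Madd X (Mzero X A B) f = f) \<and>
        (\<forall>f\<in>Hom X A B. Madd X (Mneg X f) f = Mzero X A B)) \<and>
     (\<forall>A B C f g g'. f \<in> Hom X A B \<longrightarrow> g \<in> Hom X B C \<longrightarrow> g' \<in> Hom X B C \<longrightarrow>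
        Cmp X (Madd X g g') f = Madd X (Cmp X g f) (Cmp X g' f)) \<and>
     (\<forall>A B C f f' g. f \<in> Hom X A B \<longrightarrow> f' \<in> Hom X A B \<longrightarrow> g \<in> Hom X B C \<longrightarrow>
        Cmp X g (Madd X f f') = Madd X (Cmp X g f) (Cmp X g f'))"

definition biproduct :: "('o,'m,'e,'z) extcat_scheme \<Rightarrow> 'o \<Rightarrow> 'o \<Rightarrow> 'o \<Rightarrow> 'm \<Rightarrow> 'm \<Rightarrow> 'm \<Rightarrow> 'm \<Rightarrow> bool" where
  "biproduct X A1 A2 S i1 i2 p1 p2 \<longleftrightarrow>
     i1 \<in> Hom X A1 S \<and> i2 \<in> Hom X A2 S \<and> p1 \<in> Hom X S A1 \<and> p2 \<in> Hom X S A2 \<and>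
     Cmp X p1 i1 = Idm X A1 \<and> Cmp X p2 i2 = Idm X A2 \<and>
     Cmp X p1 i2 = Mzero X A2 A1 \<and> Cmp X p2 i1 = Mzero X A1 A2 \<and>
     Madd X (Cmp X i1 p1) (Cmp X i2 p2) = Idm X S"

definition is_additive :: "('o,'m,'e,'z) extcat_scheme \<Rightarrow> bool" where
  "is_additive X \<longleftrightarrow> is_preadditive X \<and>
     (\<exists>Z\<in>Ob X. Idm X Z = Mzero X Z Z) \<and>
     (\<forall>A1\<in>Ob X. \<forall>A2\<in>Ob X. \<exists>S i1 i2 p1 p2. biproduct X A1 A2 S i1 i2 p1 p2)"

definition idem_complete :: "('o,'m,'e,'z) extcat_scheme \<Rightarrow> bool" where
  "idem_complete X \<longleftrightarrow>
     (\<forall>A\<in>Ob X. \<forall>e\<in>Hom X A A. Cmp X e e = e \<longrightarrow>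
        (\<exists>B\<in>Ob X. \<exists>r\<in>Hom X A B. \<exists>s\<in>Hom X B A. Cmp X r s = Idm X B \<and> Cmp X s r = e))"

definition iso :: "('o,'m,'e,'z) extcat_scheme \<Rightarrow> 'm \<Rightarrow> bool" where
  "iso X b \<longleftrightarrow> b \<in> Mor X \<and> (\<exists>b'\<in>Hom X (Cod X b) (Dom X b).
       Cmp X b' b = Idm X (Dom X b) \<and> Cmp X b b' = Idm X (Cod X b))"

definition ET1 :: "('o,'m,'e,'z) extcat_scheme \<Rightarrow> bool" where
  "ET1 X \<longleftrightarrow>
     (\<forall>C\<in>Ob X. \<forall>A\<in>Ob X.
        Ezero X C A \<in> Ext X C A \<and>
        (\<forall>d\<in>Ext X C A. \<forall>d'\<in>Ext X C A. Eadd X C A d d' \<in> Ext X C A) \<and>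
        (\<forall>d\<in>Ext X C A. Eneg X C A d \<in> Ext X C A) \<and>
        (\<forall>d\<in>Ext X C A. \<forall>d'\<in>Ext X C A. \<forall>d''\<in>Ext X C A.
           Eadd X C A (Eadd X C A d d') d'' = Eadd X C A d (Eadd X C A d' d'')) \<and>
        (\<forall>d\<in>Ext X C A. \<forall>d'\<in>Ext X C A. Eadd X C A d d' = Eadd X C A d' d) \<and>
        (\<forall>d\<in>Ext X C A. Eadd X C A (Ezero X C A) d = d) \<and>
        (\<forall>d\<in>Ext X C A. Eadd X C A (Eneg X C A d) d = Ezero X C A)) \<and>
     \<comment> \<open>contravariant part E(-,A)\<close>
     (\<forall>A\<in>Ob X. \<forall>C C' c. c \<in> Hom X C' C \<longrightarrow>
        (\<forall>d\<in>Ext X C A. Pull X c A d \<in> Ext X C' A) \<and>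
        (\<forall>d\<in>Ext X C A. \<forall>d'\<in>Ext X C A.
           Pull X c A (Eadd X C A d d') = Eadd X C' A (Pull X c A d) (Pull X c A d'))) \<and>
     (\<forall>A\<in>Ob X. \<forall>C\<in>Ob X. \<forall>d\<in>Ext X C A. Pull X (Idm X C) A d = d) \<and>
     (\<forall>A\<in>Ob X. \<forall>C C' C'' c c'. c \<in> Hom X C' C \<longrightarrow> c' \<in> Hom X C'' C' \<longrightarrow>
        (\<forall>d\<in>Ext X C A. Pull X (Cmp X c c') A d = Pull X c' A (Pull X c A d))) \<and>
     (\<forall>A\<in>Ob X. \<forall>C C' c c'. c \<in> Hom X C' C \<longrightarrow> c' \<in> Hom X C' C \<longrightarrow>
        (\<forall>d\<in>Ext X C A. Pull X (Madd X c c') A d = Eadd X C' A (Pull X c A d) (Pull X c' A d))) \<and>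
     \<comment> \<open>covariant part E(C,-)\<close>
     (\<forall>C\<in>Ob X. \<forall>A A' a. a \<in> Hom X A A' \<longrightarrow>
        (\<forall>d\<in>Ext X C A. Push X C a d \<in> Ext X C A') \<and>
        (\<forall>d\<in>Ext X C A. \<forall>d'\<in>Ext X C A.
           Push X C a (Eadd X C A d d') = Eadd X C A' (Push X C a d) (Push X C a d'))) \<and>
     (\<forall>A\<in>Ob X. \<forall>C\<in>Ob X. \<forall>d\<in>Ext X C A. Push X C (Idm X A) d = d) \<and>
     (\<forall>C\<in>Ob X. \<forall>A A' A'' a a'. a \<in> Hom X A A' \<longrightarrow> a' \<in> Hom X A' A'' \<longrightarrow>
        (\<forall>d\<in>Ext X C A. Push X C (Cmp X a' a) d = Push X C a' (Push X C a d))) \<and>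
     (\<forall>C\<in>Ob X. \<forall>A A' a a'. a \<in> Hom X A A' \<longrightarrow> a' \<in> Hom X A A' \<longrightarrow>
        (\<forall>d\<in>Ext X C A. Push X C (Madd X a a') d = Eadd X C A' (Push X C a d) (Push X C a' d))) \<and>
     \<comment> \<open>bifunctoriality\<close>
     (\<forall>A A' C C' a c. a \<in> Hom X A A' \<longrightarrow> c \<in> Hom X C' C \<longrightarrow>
        (\<forall>d\<in>Ext X C A. Push X C' a (Pull X c A d) = Pull X c A' (Push X C a d)))"

definition seq_equiv :: "('o,'m,'e,'z) extcat_scheme \<Rightarrow> 'm \<Rightarrow> 'm \<Rightarrow> 'm \<Rightarrow> 'm \<Rightarrow> bool" where
  "seq_equiv X x y x' y' \<longleftrightarrow>
     x' \<in> Mor X \<and> y' \<in> Mor X \<and> Dom X x' = Dom X x \<and> Cod X y' = Cod X y \<and>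
     Cod X x' = Dom X y' \<and>
     (\<exists>b\<in>Hom X (Cod X x) (Cod X x'). iso X b \<and> Cmp X b x = x' \<and> Cmp X y' b = y)"

definition ET2 :: "('o,'m,'e,'z) extcat_scheme \<Rightarrow> bool" where
  "ET2 X \<longleftrightarrow>
     \<comment> \<open>s(delta) consists of sequences A -> B -> C\<close>
     (\<forall>C A d x y. Rlz X C A d x y \<longrightarrow>
        C \<in> Ob X \<and> A \<in> Ob X \<and> d \<in> Ext X C A \<and> x \<in> Mor X \<and> y \<in> Mor X \<and>
        Dom X x = A \<and> Cod X y = C \<and> Cod X x = Dom X y) \<and>
     \<comment> \<open>s(delta) is an equivalence class of such sequences\<close>
     (\<forall>C\<in>Ob X. \<forall>A\<in>Ob X. \<forall>d\<in>Ext X C A. \<exists>x y. Rlz X C A d x y) \<and>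
     (\<forall>C A d x y x' y'. Rlz X C A d x y \<longrightarrow> (Rlz X C A d x' y' \<longleftrightarrow> seq_equiv X x y x' y')) \<and>
     \<comment> \<open>realisation of morphisms of extensions\<close>
     (\<forall>C A C' A' d d' a c x y x' y'.
        Rlz X C A d x y \<longrightarrow> Rlz X C' A' d' x' y' \<longrightarrow>
        a \<in> Hom X A A' \<longrightarrow> c \<in> Hom X C C' \<longrightarrow> Push X C a d = Pull X c A' d' \<longrightarrow>
        (\<exists>b\<in>Hom X (Cod X x) (Cod X x'). Cmp X b x = Cmp X x' a \<and> Cmp X y' b = Cmp X c y)) \<and>
     \<comment> \<open>additivity: s(0) is the split sequence\<close>
     (\<forall>A\<in>Ob X. \<forall>C\<in>Ob X. \<forall>S i1 i2 p1 p2. biproduct X A C S i1 i2 p1 p2 \<longrightarrow>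
        Rlz X C A (Ezero X C A) i1 p2) \<and>
     \<comment> \<open>additivity: s(delta + delta') = s(delta) + s(delta')\<close>
     (\<forall>C A d x y C' A' d' x' y' SA iA iA' pA pA' SB iB iB' pB pB' SC iC iC' pC pC'.
        Rlz X C A d x y \<longrightarrow> Rlz X C' A' d' x' y' \<longrightarrow>
        biproduct X A A' SA iA iA' pA pA' \<longrightarrow>
        biproduct X (Cod X x) (Cod X x') SB iB iB' pB pB' \<longrightarrow>
        biproduct X C C' SC iC iC' pC pC' \<longrightarrow>
        Rlz X SC SA
          (Eadd X SC SA (Push X SC iA (Pull X pC A d)) (Push X SC iA' (Pull X pC' A' d')))
          (Madd X (Cmp X iB (Cmp X x pA)) (Cmp X iB' (Cmp X x' pA')))
          (Madd X (Cmp X iC (Cmp X y pB)) (Cmp X iC' (Cmp X y' pB'))))"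

definition ET3 :: "('o,'m,'e,'z) extcat_scheme \<Rightarrow> bool" where
  "ET3 X \<longleftrightarrow>
     (\<forall>C A C' A' d d' x y x' y' a b.
        Rlz X C A d x y \<longrightarrow> Rlz X C' A' d' x' y' \<longrightarrow>
        a \<in> Hom X A A' \<longrightarrow> b \<in> Hom X (Cod X x) (Cod X x') \<longrightarrow> Cmp X b x = Cmp X x' a \<longrightarrow>
        (\<exists>c\<in>Hom X C C'. Cmp X c y = Cmp X y' b \<and> Push X C a d = Pull X c A' d'))"

definition ET3op :: "('o,'m,'e,'z) extcat_scheme \<Rightarrow> bool" where
  "ET3op X \<longleftrightarrow>
     (\<forall>C A C' A' d d' x y x' y' b c.
        Rlz X C A d x y \<longrightarrow> Rlz X C' A' d' x' y' \<longrightarrow>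
        b \<in> Hom X (Cod X x) (Cod X x') \<longrightarrow> c \<in> Hom X C C' \<longrightarrow> Cmp X y' b = Cmp X c y \<longrightarrow>
        (\<exists>a\<in>Hom X A A'. Cmp X x' a = Cmp X b x \<and> Push X C a d = Pull X c A' d'))"

definition ET4 :: "('o,'m,'e,'z) extcat_scheme \<Rightarrow> bool" where
  "ET4 X \<longleftrightarrow>
     (\<forall>A B D F d d' f f' g g'.
        Rlz X D A d f f' \<longrightarrow> Rlz X F B d' g g' \<longrightarrow> Cod X f = B \<longrightarrow>
        (\<exists>E\<in>Ob X. \<exists>h'\<in>Hom X (Cod X g) E. \<exists>dd\<in>Hom X D E. \<exists>e\<in>Hom X E F. \<exists>d''\<in>Ext X E A.
           Rlz X E A d'' (Cmp X g f) h' \<and>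
           Cmp X h' g = Cmp X dd f' \<and> Cmp X e h' = g' \<and>
           Rlz X F D (Push X F f' d') dd e \<and>
           Pull X dd A d'' = d \<and>
           Push X E f d'' = Pull X e B d'))"

definition ET4op :: "('o,'m,'e,'z) extcat_scheme \<Rightarrow> bool" where
  "ET4op X \<longleftrightarrow>
     (\<forall>A B D F d d' f f' g g'.
        Rlz X A D d f' f \<longrightarrow> Rlz X B F d' g' g \<longrightarrow> Dom X f = B \<longrightarrow>
        (\<exists>E\<in>Ob X. \<exists>h'\<in>Hom X E (Dom X g). \<exists>dd\<in>Hom X E D. \<exists>e\<in>Hom X F E. \<exists>d''\<in>Ext X A E.
           Rlz X A E d'' h' (Cmp X f g) \<and>
           Cmp X g h' = Cmp X f' dd \<and> Cmp X h' e = g' \<and>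
           Rlz X D F (Pull X f' F d') e dd \<and>
           Push X A dd d'' = d \<and>
           Pull X f E d'' = Push X B e d'))"

definition extriangulated :: "('o,'m,'e,'z) extcat_scheme \<Rightarrow> bool" where
  "extriangulated X \<longleftrightarrow> is_additive X \<and> ET1 X \<and> ET2 X \<and> ET3 X \<and> ET3op X \<and> ET4 X \<and> ET4op X"

definition restr :: "('o,'m,'e,'z) extcat_scheme \<Rightarrow> ('o \<Rightarrow> 'o \<Rightarrow> 'e set) \<Rightarrow> ('o,'m,'e,'z) extcat_scheme" where
  "restr X F = X\<lparr>Ext := F, Rlz := (\<lambda>C A d x y. d \<in> F C A \<and> Rlz X C A d x y)\<rparr>"

definition external_triangulation :: "('o,'m,'e,'z) extcat_scheme \<Rightarrow> ('o \<Rightarrow> 'o \<Rightarrow> 'e set) \<Rightarrow> bool" where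
  "external_triangulation X F \<longleftrightarrow> extriangulated (restr X F)"

definition D_monic :: "('o,'m,'e,'z) extcat_scheme \<Rightarrow> 'o set \<Rightarrow> 'm \<Rightarrow> bool" where
  "D_monic X D f \<longleftrightarrow> (\<forall>Y\<in>D. \<forall>g\<in>Hom X (Dom X f) Y. \<exists>h\<in>Hom X (Cod X f) Y. Cmp X h f = g)"

definition D_epic :: "('o,'m,'e,'z) extcat_scheme \<Rightarrow> 'o set \<Rightarrow> 'm \<Rightarrow> bool" where
  "D_epic X D f \<longleftrightarrow> (\<forall>Y\<in>D. \<forall>g\<in>Hom X Y (Cod X f). \<exists>h\<in>Hom X Y (Dom X f). Cmp X f h = g)"

definition left_approx :: "('o,'m,'e,'z) extcat_scheme \<Rightarrow> 'o set \<Rightarrow> 'o \<Rightarrow> 'm \<Rightarrow> bool" where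
  "left_approx X D A f \<longleftrightarrow> f \<in> Mor X \<and> Dom X f = A \<and> Cod X f \<in> D \<and> D_monic X D f"

definition right_approx :: "('o,'m,'e,'z) extcat_scheme \<Rightarrow> 'o set \<Rightarrow> 'o \<Rightarrow> 'm \<Rightarrow> bool" where
  "right_approx X D A f \<longleftrightarrow> f \<in> Mor X \<and> Cod X f = A \<and> Dom X f \<in> D \<and> D_epic X D f"

definition covariantly_finite :: "('o,'m,'e,'z) extcat_scheme \<Rightarrow> 'o set \<Rightarrow> bool" where
  "covariantly_finite X D \<longleftrightarrow> (\<forall>A\<in>Ob X. \<exists>f. left_approx X D A f)"

definition contravariantly_finite :: "('o,'m,'e,'z) extcat_scheme \<Rightarrow> 'o set \<Rightarrow> bool" where
  "contravariantly_finite X D \<longleftrightarrow> (\<forall>A\<in>Ob X. \<exists>f. right_approx X D A f)"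

definition functorially_finite :: "('o,'m,'e,'z) extcat_scheme \<Rightarrow> 'o set \<Rightarrow> bool" where
  "functorially_finite X D \<longleftrightarrow> covariantly_finite X D \<and> contravariantly_finite X D"

definition inflation :: "('o,'m,'e,'z) extcat_scheme \<Rightarrow> 'm \<Rightarrow> bool" where
  "inflation X x \<longleftrightarrow> (\<exists>C A d y. Rlz X C A d x y)"

definition deflation :: "('o,'m,'e,'z) extcat_scheme \<Rightarrow> 'm \<Rightarrow> bool" where
  "deflation X y \<longleftrightarrow> (\<exists>C A d x. Rlz X C A d x y)"

definition IExt :: "('o,'m,'e,'z) extcat_scheme \<Rightarrow> 'o set \<Rightarrow> 'o \<Rightarrow> 'o \<Rightarrow> 'e set" where
  "IExt X D C A = {d \<in> Ext X C A. \<exists>x y. Rlz X C A d x y \<and> D_monic X D x}"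

definition PExt :: "('o,'m,'e,'z) extcat_scheme \<Rightarrow> 'o set \<Rightarrow> 'o \<Rightarrow> 'o \<Rightarrow> 'e set" where
  "PExt X D C A = {d \<in> Ext X C A. \<exists>x y. Rlz X C A d x y \<and> D_epic X D y}"

definition DExt :: "('o,'m,'e,'z) extcat_scheme \<Rightarrow> 'o set \<Rightarrow> 'o \<Rightarrow> 'o \<Rightarrow> 'e set" where
  "DExt X D C A = IExt X D C A \<inter> PExt X D C A"

definition Inj :: "('o,'m,'e,'z) extcat_scheme \<Rightarrow> ('o \<Rightarrow> 'o \<Rightarrow> 'e set) \<Rightarrow> 'o set" where
  "Inj X F = {I \<in> Ob X. \<forall>C\<in>Ob X. F C I = {Ezero X C I}}"

definition Proj :: "('o,'m,'e,'z) extcat_scheme \<Rightarrow> ('o \<Rightarrow> 'o \<Rightarrow> 'e set) \<Rightarrow> 'o set" where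
  "Proj X F = {P \<in> Ob X. \<forall>A\<in>Ob X. F P A = {Ezero X P A}}"

definition enough_inj :: "('o,'m,'e,'z) extcat_scheme \<Rightarrow> ('o \<Rightarrow> 'o \<Rightarrow> 'e set) \<Rightarrow> bool" where
  "enough_inj X F \<longleftrightarrow> (\<forall>A\<in>Ob X. \<exists>C d x y.
      d \<in> F C A \<and> Rlz X C A d x y \<and> Cod X x \<in> Inj X F)"

definition enough_proj :: "('o,'m,'e,'z) extcat_scheme \<Rightarrow> ('o \<Rightarrow> 'o \<Rightarrow> 'e set) \<Rightarrow> bool" where
  "enough_proj X F \<longleftrightarrow> (\<forall>C\<in>Ob X. \<exists>A d x y.
      d \<in> F C A \<and> Rlz X C A d x y \<and> Dom X y \<in> Proj X F)"

definition is_direct_sum :: "('o,'m,'e,'z) extcat_scheme \<Rightarrow> 'i set \<Rightarrow> ('i \<Rightarrow> 'o) \<Rightarrow> 'o \<Rightarrow> ('i \<Rightarrow> 'm) \<Rightarrow> bool" where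
  "is_direct_sum X I Fm S iota \<longleftrightarrow> S \<in> Ob X \<and> (\<forall>i\<in>I. Fm i \<in> Ob X \<and> iota i \<in> Hom X (Fm i) S) \<and>
     (\<forall>T\<in>Ob X. \<forall>g. (\<forall>i\<in>I. g i \<in> Hom X (Fm i) T) \<longrightarrow>
        (\<exists>h\<in>Hom X S T. (\<forall>i\<in>I. Cmp X h (iota i) = g i) \<and>
           (\<forall>h'\<in>Hom X S T. (\<forall>i\<in>I. Cmp X h' (iota i) = g i) \<longrightarrow> h' = h)))"

text \<open>Closure under all existing direct sums of families indexed by sets of the type 'i.\<close>
definition closed_under_sums :: "'i itself \<Rightarrow> ('o,'m,'e,'z) extcat_scheme \<Rightarrow> 'o set \<Rightarrow> bool" where
  "closed_under_sums _ X D \<longleftrightarrow>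
     (\<forall>(I::'i set) Fm S iota. (\<forall>i\<in>I. Fm i \<in> D) \<longrightarrow> is_direct_sum X I Fm S iota \<longrightarrow> S \<in> D)"

definition closed_under_summands :: "('o,'m,'e,'z) extcat_scheme \<Rightarrow> 'o set \<Rightarrow> bool" where
  "closed_under_summands X D \<longleftrightarrow>
     (\<forall>S\<in>D. \<forall>A1 A2 i1 i2 p1 p2. biproduct X A1 A2 S i1 i2 p1 p2 \<longrightarrow> A1 \<in> D)"

end

theory Submission
  imports Defs
begin

lemma restr_simps[simp]:
 "Ob (restr X F) = Ob X" "Mor (restr X F) = Mor X" "Dom (restr X F) = Dom X" "Cod (restr X F) = Cod X"
 "Cmp (restr X F) = Cmp X" "Idm (restr X F) = Idm X" "Madd (restr X F) = Madd X" "Mneg (restr X F) = Mneg X"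
 "Mzero (restr X F) = Mzero X"
 "Ext (restr X F) = F" "Eadd (restr X F) = Eadd X" "Eneg (restr X F) = Eneg X" "Ezero (restr X F) = Ezero X"
 "Pull (restr X F) = Pull X" "Push (restr X F) = Push X"
 "Rlz (restr X F) = (\<lambda>C A d x y. d \<in> F C A \<and> Rlz X C A d x y)"
  by (simp_all add: restr_def)

lemma restr_Hom[simp]: "Hom (restr X F) = Hom X"
  by (intro ext) (simp add: Hom_def)

lemma restr_biproduct[simp]: "biproduct (restr X F) = biproduct X"
  by (intro ext) (simp add: biproduct_def)

lemma restr_iso[simp]: "iso (restr X F) = iso X"
  by (intro ext) (simp add: iso_def)

lemma restr_seq_equiv[simp]: "seq_equiv (restr X F) = seq_equiv X"
  by (intro ext) (simp add: seq_equiv_def)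

lemma restr_additive[simp]: "is_additive (restr X F) = is_additive X"
  by (simp add: is_additive_def is_preadditive_def is_category_def)

locale extri =
  fixes X :: "('o,'m,'e,'z) extcat_scheme"
  assumes ext: "extriangulated X"
begin

lemma cat: "is_category X" using ext by (simp add: extriangulated_def is_additive_def is_preadditive_def)
lemma pre: "is_preadditive X" using ext by (simp add: extriangulated_def is_additive_def)
lemma E1: "ET1 X" using ext by (simp add: extriangulated_def)
lemma E2: "ET2 X" using ext by (simp add: extriangulated_def)

lemma homD: "f \<in> Hom X A B \<Longrightarrow> A \<in> Ob X \<and> B \<in> Ob X \<and> f \<in> Mor X \<and> Dom X f = A \<and> Cod X f = B"
  using cat by (auto simp: is_category_def Hom_def)
lemma homI: "f \<in> Mor X \<Longrightarrow> f \<in> Hom X (Dom X f) (Cod X f)"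
  by (simp add: Hom_def)
lemma comp: "f \<in> Hom X A B \<Longrightarrow> g \<in> Hom X B C \<Longrightarrow> Cmp X g f \<in> Hom X A C"
  using cat unfolding is_category_def by blast
lemma assoc: "f \<in> Hom X A B \<Longrightarrow> g \<in> Hom X B C \<Longrightarrow> h \<in> Hom X C D \<Longrightarrow>
   Cmp X h (Cmp X g f) = Cmp X (Cmp X h g) f"
  using cat unfolding is_category_def by blast
lemma idm: "A \<in> Ob X \<Longrightarrow> Idm X A \<in> Hom X A A"
  using cat unfolding is_category_def by blast
lemma idl: "f \<in> Hom X A B \<Longrightarrow> Cmp X (Idm X B) f = f"
  using cat unfolding is_category_def by blast
lemma idr: "f \<in> Hom X A B \<Longrightarrow> Cmp X f (Idm X A) = f"
  using cat unfolding is_category_def by blast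

lemma pre_obj: assumes "A \<in> Ob X" "B \<in> Ob X"
  shows "Mzero X A B \<in> Hom X A B \<and>
        (\<forall>f\<in>Hom X A B. \<forall>g\<in>Hom X A B. Madd X f g \<in> Hom X A B) \<and>
        (\<forall>f\<in>Hom X A B. Mneg X f \<in> Hom X A B) \<and>
        (\<forall>f\<in>Hom X A B. \<forall>g\<in>Hom X A B. \<forall>h\<in>Hom X A B.
            Madd X (Madd X f g) h = Madd X f (Madd X g h)) \<and>
        (\<forall>f\<in>Hom X A B. \<forall>g\<in>Hom X A B. Madd X f g = Madd X g f) \<and>
        (\<forall>f\<in>Hom X A B. Madd X (Mzero X A B) f = f) \<and>
        (\<forall>f\<in>Hom X A B. Madd X (Mneg X f) f = Mzero X A B)"
proof -
  have "\<forall>A\<in>Ob X. \<forall>B\<in>Ob X.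
        Mzero X A B \<in> Hom X A B \<and>
        (\<forall>f\<in>Hom X A B. \<forall>g\<in>Hom X A B. Madd X f g \<in> Hom X A B) \<and>
        (\<forall>f\<in>Hom X A B. Mneg X f \<in> Hom X A B) \<and>
        (\<forall>f\<in>Hom X A B. \<forall>g\<in>Hom X A B. \<forall>h\<in>Hom X A B.
            Madd X (Madd X f g) h = Madd X f (Madd X g h)) \<and>
        (\<forall>f\<in>Hom X A B. \<forall>g\<in>Hom X A B. Madd X f g = Madd X g f) \<and>
        (\<forall>f\<in>Hom X A B. Madd X (Mzero X A B) f = f) \<and>
        (\<forall>f\<in>Hom X A B. Madd X (Mneg X f) f = Mzero X A B)"
    using pre unfolding is_preadditive_def by (elim conjE)
  from bspec[OF bspec[OF this assms(1)] assms(2)] show ?thesis .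
qed

lemma zero_hom: "A \<in> Ob X \<Longrightarrow> B \<in> Ob X \<Longrightarrow> Mzero X A B \<in> Hom X A B"
  using pre_obj by blast
lemma hom_obj: "f \<in> Hom X A B \<Longrightarrow> A \<in> Ob X \<and> B \<in> Ob X" using homD by blast
lemma madd_hom: "f \<in> Hom X A B \<Longrightarrow> g \<in> Hom X A B \<Longrightarrow> Madd X f g \<in> Hom X A B"
  using pre_obj[OF hom_obj[of f A B, THEN conjunct1] hom_obj[of f A B, THEN conjunct2]] by blast
lemma mneg_hom: "f \<in> Hom X A B \<Longrightarrow> Mneg X f \<in> Hom X A B"
  using pre_obj[OF hom_obj[of f A B, THEN conjunct1] hom_obj[of f A B, THEN conjunct2]] by blast
lemma madd_assoc: "f \<in> Hom X A B \<Longrightarrow> g \<in> Hom X A B \<Longrightarrow> h \<in> Hom X A B \<Longrightarrow>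
   Madd X (Madd X f g) h = Madd X f (Madd X g h)"
  using pre_obj[OF hom_obj[of f A B, THEN conjunct1] hom_obj[of f A B, THEN conjunct2]] by blast
lemma madd_comm: "f \<in> Hom X A B \<Longrightarrow> g \<in> Hom X A B \<Longrightarrow> Madd X f g = Madd X g f"
  using pre_obj[OF hom_obj[of f A B, THEN conjunct1] hom_obj[of f A B, THEN conjunct2]] by blast
lemma madd_lzero: "f \<in> Hom X A B \<Longrightarrow> Madd X (Mzero X A B) f = f"
  using pre_obj[OF hom_obj[of f A B, THEN conjunct1] hom_obj[of f A B, THEN conjunct2]] by blast
lemma madd_linv: "f \<in> Hom X A B \<Longrightarrow> Madd X (Mneg X f) f = Mzero X A B"
  using pre_obj[OF hom_obj[of f A B, THEN conjunct1] hom_obj[of f A B, THEN conjunct2]] by blast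
lemma distl: "f \<in> Hom X A B \<Longrightarrow> g \<in> Hom X B C \<Longrightarrow> g' \<in> Hom X B C \<Longrightarrow>
   Cmp X (Madd X g g') f = Madd X (Cmp X g f) (Cmp X g' f)"
  using pre unfolding is_preadditive_def by blast
lemma distr: "f \<in> Hom X A B \<Longrightarrow> f' \<in> Hom X A B \<Longrightarrow> g \<in> Hom X B C \<Longrightarrow>
   Cmp X g (Madd X f f') = Madd X (Cmp X g f) (Cmp X g f')"
  using pre unfolding is_preadditive_def by blast

lemma madd_rzero: assumes "f \<in> Hom X A B" shows "Madd X f (Mzero X A B) = f"
  using madd_comm[OF assms zero_hom] madd_lzero[OF assms] hom_obj[OF assms] by simp

lemma madd_cancel: assumes f: "f \<in> Hom X A B" and e: "Madd X f f = f" shows "f = Mzero X A B"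
proof -
  have n: "Mneg X f \<in> Hom X A B" using mneg_hom f by blast
  have "f = Madd X (Mzero X A B) f" using madd_lzero f by simp
  also have "\<dots> = Madd X (Madd X (Mneg X f) f) f" using madd_linv f by simp
  also have "\<dots> = Madd X (Mneg X f) (Madd X f f)" using madd_assoc n f by blast
  also have "\<dots> = Mzero X A B" using e madd_linv f by simp
  finally show ?thesis .
qed

lemma comp_zero_r: assumes g: "g \<in> Hom X B C" and A: "A \<in> Ob X"
  shows "Cmp X g (Mzero X A B) = Mzero X A C"
proof -
  have z: "Mzero X A B \<in> Hom X A B" using zero_hom[OF A] hom_obj[OF g] by blast
  have "Cmp X g (Mzero X A B) = Cmp X g (Madd X (Mzero X A B) (Mzero X A B))"
    using madd_lzero z by simp
  also have "\<dots> = Madd X (Cmp X g (Mzero X A B)) (Cmp X g (Mzero X A B))" using distr z g by blast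
  finally show ?thesis using madd_cancel comp z g by metis
qed

lemma comp_zero_l: assumes f: "f \<in> Hom X A B" and C: "C \<in> Ob X"
  shows "Cmp X (Mzero X B C) f = Mzero X A C"
proof -
  have z: "Mzero X B C \<in> Hom X B C" using zero_hom[OF _ C] hom_obj[OF f] by blast
  have "Cmp X (Mzero X B C) f = Cmp X (Madd X (Mzero X B C) (Mzero X B C)) f"
    using madd_lzero z by simp
  also have "\<dots> = Madd X (Cmp X (Mzero X B C) f) (Cmp X (Mzero X B C) f)" using distl z f by blast
  finally show ?thesis using madd_cancel comp z f by metis
qed


lemmas E1u = E1[unfolded ET1_def]
lemmas E1_1 = E1u[THEN conjunct1]
lemmas E1_2 = E1u[THEN conjunct2, THEN conjunct1]
lemmas E1_3 = E1u[THEN conjunct2, THEN conjunct2, THEN conjunct1]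
lemmas E1_4 = E1u[THEN conjunct2, THEN conjunct2, THEN conjunct2, THEN conjunct1]
lemmas E1_5 = E1u[THEN conjunct2, THEN conjunct2, THEN conjunct2, THEN conjunct2, THEN conjunct1]
lemmas E1_6 = E1u[THEN conjunct2, THEN conjunct2, THEN conjunct2, THEN conjunct2, THEN conjunct2, THEN conjunct1]
lemmas E1_7 = E1u[THEN conjunct2, THEN conjunct2, THEN conjunct2, THEN conjunct2, THEN conjunct2, THEN conjunct2, THEN conjunct1]
lemmas E1_8 = E1u[THEN conjunct2, THEN conjunct2, THEN conjunct2, THEN conjunct2, THEN conjunct2, THEN conjunct2, THEN conjunct2, THEN conjunct1]
lemmas E1_9 = E1u[THEN conjunct2, THEN conjunct2, THEN conjunct2, THEN conjunct2, THEN conjunct2, THEN conjunct2, THEN conjunct2, THEN conjunct2, THEN conjunct1]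
lemmas E1_10 = E1u[THEN conjunct2, THEN conjunct2, THEN conjunct2, THEN conjunct2, THEN conjunct2, THEN conjunct2, THEN conjunct2, THEN conjunct2, THEN conjunct2]

lemma e_zero: "C \<in> Ob X \<Longrightarrow> A \<in> Ob X \<Longrightarrow> Ezero X C A \<in> Ext X C A"
  using E1_1 by blast
lemma e_add: "C \<in> Ob X \<Longrightarrow> A \<in> Ob X \<Longrightarrow> d \<in> Ext X C A \<Longrightarrow> d' \<in> Ext X C A \<Longrightarrow> Eadd X C A d d' \<in> Ext X C A"
  using E1_1 by blast
lemma e_neg: "C \<in> Ob X \<Longrightarrow> A \<in> Ob X \<Longrightarrow> d \<in> Ext X C A \<Longrightarrow> Eneg X C A d \<in> Ext X C A"
  using E1_1 by blast
lemma e_assoc: "C \<in> Ob X \<Longrightarrow> A \<in> Ob X \<Longrightarrow> d \<in> Ext X C A \<Longrightarrow> d' \<in> Ext X C A \<Longrightarrow> d'' \<in> Ext X C A \<Longrightarrow>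
  Eadd X C A (Eadd X C A d d') d'' = Eadd X C A d (Eadd X C A d' d'')"
  using E1_1 by blast
lemma e_comm: "C \<in> Ob X \<Longrightarrow> A \<in> Ob X \<Longrightarrow> d \<in> Ext X C A \<Longrightarrow> d' \<in> Ext X C A \<Longrightarrow> Eadd X C A d d' = Eadd X C A d' d"
  using E1_1 by blast
lemma e_lzero: "C \<in> Ob X \<Longrightarrow> A \<in> Ob X \<Longrightarrow> d \<in> Ext X C A \<Longrightarrow> Eadd X C A (Ezero X C A) d = d"
  using E1_1 by blast
lemma e_linv: "C \<in> Ob X \<Longrightarrow> A \<in> Ob X \<Longrightarrow> d \<in> Ext X C A \<Longrightarrow> Eadd X C A (Eneg X C A d) d = Ezero X C A"
  using E1_1 by blast
lemma e_rzero: "C \<in> Ob X \<Longrightarrow> A \<in> Ob X \<Longrightarrow> d \<in> Ext X C A \<Longrightarrow> Eadd X C A d (Ezero X C A) = d"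
  using e_comm e_lzero e_zero by metis
lemma e_cancel: assumes C: "C \<in> Ob X" and A: "A \<in> Ob X" and d: "d \<in> Ext X C A"
  and e: "Eadd X C A d d = d" shows "d = Ezero X C A"
proof -
  have n: "Eneg X C A d \<in> Ext X C A" using e_neg C A d by blast
  have "d = Eadd X C A (Ezero X C A) d" using e_lzero C A d by simp
  also have "\<dots> = Eadd X C A (Eadd X C A (Eneg X C A d) d) d" using e_linv C A d by simp
  also have "\<dots> = Eadd X C A (Eneg X C A d) (Eadd X C A d d)" using e_assoc C A n d by blast
  also have "\<dots> = Ezero X C A" using e e_linv C A d by simp
  finally show ?thesis .
qed

lemma pull_ext: "c \<in> Hom X C' C \<Longrightarrow> A \<in> Ob X \<Longrightarrow> d \<in> Ext X C A \<Longrightarrow> Pull X c A d \<in> Ext X C' A"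
  using E1_2 by blast
lemma pull_add: "c \<in> Hom X C' C \<Longrightarrow> A \<in> Ob X \<Longrightarrow> d \<in> Ext X C A \<Longrightarrow> d' \<in> Ext X C A \<Longrightarrow>
  Pull X c A (Eadd X C A d d') = Eadd X C' A (Pull X c A d) (Pull X c A d')"
  using E1_2 by blast
lemma pull_id: "C \<in> Ob X \<Longrightarrow> A \<in> Ob X \<Longrightarrow> d \<in> Ext X C A \<Longrightarrow> Pull X (Idm X C) A d = d"
  using E1_3 by blast
lemma pull_comp: "c \<in> Hom X C' C \<Longrightarrow> c' \<in> Hom X C'' C' \<Longrightarrow> A \<in> Ob X \<Longrightarrow> d \<in> Ext X C A \<Longrightarrow>
  Pull X (Cmp X c c') A d = Pull X c' A (Pull X c A d)"
  using E1_4 by blast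
lemma push_ext: "a \<in> Hom X A A' \<Longrightarrow> C \<in> Ob X \<Longrightarrow> d \<in> Ext X C A \<Longrightarrow> Push X C a d \<in> Ext X C A'"
  using E1_6 by blast
lemma push_add: "a \<in> Hom X A A' \<Longrightarrow> C \<in> Ob X \<Longrightarrow> d \<in> Ext X C A \<Longrightarrow> d' \<in> Ext X C A \<Longrightarrow>
  Push X C a (Eadd X C A d d') = Eadd X C A' (Push X C a d) (Push X C a d')"
  using E1_6 by blast
lemma push_id: "C \<in> Ob X \<Longrightarrow> A \<in> Ob X \<Longrightarrow> d \<in> Ext X C A \<Longrightarrow> Push X C (Idm X A) d = d"
  using E1_7 by blast
lemma push_comp: "a \<in> Hom X A A' \<Longrightarrow> a' \<in> Hom X A' A'' \<Longrightarrow> C \<in> Ob X \<Longrightarrow> d \<in> Ext X C A \<Longrightarrow>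
  Push X C (Cmp X a' a) d = Push X C a' (Push X C a d)"
  using E1_8 by blast
lemma push_pull: "a \<in> Hom X A A' \<Longrightarrow> c \<in> Hom X C' C \<Longrightarrow> d \<in> Ext X C A \<Longrightarrow>
  Push X C' a (Pull X c A d) = Pull X c A' (Push X C a d)"
  using E1_10 by blast

lemma pull_zero: assumes c: "c \<in> Hom X C' C" and A: "A \<in> Ob X"
  shows "Pull X c A (Ezero X C A) = Ezero X C' A"
proof -
  have C: "C \<in> Ob X" "C' \<in> Ob X" using hom_obj[OF c] by auto
  have z: "Ezero X C A \<in> Ext X C A" using e_zero C A by blast
  have "Pull X c A (Ezero X C A) = Pull X c A (Eadd X C A (Ezero X C A) (Ezero X C A))"
    using e_lzero C A z by simp
  also have "\<dots> = Eadd X C' A (Pull X c A (Ezero X C A)) (Pull X c A (Ezero X C A))"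
    using pull_add c A z by blast
  finally show ?thesis using e_cancel pull_ext c A z C by metis
qed

lemma push_zero: assumes a: "a \<in> Hom X A A'" and C: "C \<in> Ob X"
  shows "Push X C a (Ezero X C A) = Ezero X C A'"
proof -
  have A: "A \<in> Ob X" "A' \<in> Ob X" using hom_obj[OF a] by auto
  have z: "Ezero X C A \<in> Ext X C A" using e_zero C A by blast
  have "Push X C a (Ezero X C A) = Push X C a (Eadd X C A (Ezero X C A) (Ezero X C A))"
    using e_lzero C A z by simp
  also have "\<dots> = Eadd X C A' (Push X C a (Ezero X C A)) (Push X C a (Ezero X C A))"
    using push_add a C z by blast
  finally show ?thesis using e_cancel push_ext a A z C by metis
qed

lemmas E2u = E2[unfolded ET2_def]
lemmas E2_1 = E2u[THEN conjunct1]
lemmas E2_2 = E2u[THEN conjunct2, THEN conjunct1]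
lemmas E2_3 = E2u[THEN conjunct2, THEN conjunct2, THEN conjunct1]
lemmas E2_4 = E2u[THEN conjunct2, THEN conjunct2, THEN conjunct2, THEN conjunct1]
lemmas E2_5 = E2u[THEN conjunct2, THEN conjunct2, THEN conjunct2, THEN conjunct2, THEN conjunct1]
lemmas E2_6 = E2u[THEN conjunct2, THEN conjunct2, THEN conjunct2, THEN conjunct2, THEN conjunct2]

lemma rlzD: "Rlz X C A d x y \<Longrightarrow>
   C \<in> Ob X \<and> A \<in> Ob X \<and> d \<in> Ext X C A \<and> x \<in> Mor X \<and> y \<in> Mor X \<and>
   Dom X x = A \<and> Cod X y = C \<and> Cod X x = Dom X y"
  using E2_1 by blast
lemma rlz_hom: "Rlz X C A d x y \<Longrightarrow> x \<in> Hom X A (Cod X x) \<and> y \<in> Hom X (Cod X x) C"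
  using rlzD[of C A d x y] by (auto simp: Hom_def)
lemma rlz_ex: "C \<in> Ob X \<Longrightarrow> A \<in> Ob X \<Longrightarrow> d \<in> Ext X C A \<Longrightarrow> \<exists>x y. Rlz X C A d x y"
  using E2_2 by blast
lemma rlz_equiv: "Rlz X C A d x y \<Longrightarrow> Rlz X C A d x' y' \<longleftrightarrow> seq_equiv X x y x' y'"
  using E2_3 by blast
lemma rlz_mor: "Rlz X C A d x y \<Longrightarrow> Rlz X C' A' d' x' y' \<Longrightarrow>
        a \<in> Hom X A A' \<Longrightarrow> c \<in> Hom X C C' \<Longrightarrow> Push X C a d = Pull X c A' d' \<Longrightarrow>
        (\<exists>b\<in>Hom X (Cod X x) (Cod X x'). Cmp X b x = Cmp X x' a \<and> Cmp X y' b = Cmp X c y)"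
  using E2_4 by blast
lemma rlz_split: "biproduct X A C S i1 i2 p1 p2 \<Longrightarrow> A \<in> Ob X \<Longrightarrow> C \<in> Ob X \<Longrightarrow>
   Rlz X C A (Ezero X C A) i1 p2"
  using E2_5 by blast
lemma et3: "Rlz X C A d x y \<Longrightarrow> Rlz X C' A' d' x' y' \<Longrightarrow>
        a \<in> Hom X A A' \<Longrightarrow> b \<in> Hom X (Cod X x) (Cod X x') \<Longrightarrow> Cmp X b x = Cmp X x' a \<Longrightarrow>
        (\<exists>c\<in>Hom X C C'. Cmp X c y = Cmp X y' b \<and> Push X C a d = Pull X c A' d')"
  using ext unfolding extriangulated_def ET3_def by blast
lemma et3op: "Rlz X C A d x y \<Longrightarrow> Rlz X C' A' d' x' y' \<Longrightarrow>
        b \<in> Hom X (Cod X x) (Cod X x') \<Longrightarrow> c \<in> Hom X C C' \<Longrightarrow> Cmp X y' b = Cmp X c y \<Longrightarrow>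
        (\<exists>a\<in>Hom X A A'. Cmp X x' a = Cmp X b x \<and> Push X C a d = Pull X c A' d')"
  using ext unfolding extriangulated_def ET3op_def by blast


lemma zero_obj: "\<exists>Z\<in>Ob X. Idm X Z = Mzero X Z Z"
  using ext unfolding extriangulated_def is_additive_def by blast

lemma triv1: assumes Z: "Z \<in> Ob X" "Idm X Z = Mzero X Z Z" and A: "A \<in> Ob X"
  shows "Rlz X Z A (Ezero X Z A) (Idm X A) (Mzero X A Z)"
proof -
  have h: "Idm X A \<in> Hom X A A" "Mzero X Z A \<in> Hom X Z A" "Mzero X A Z \<in> Hom X A Z"
    using idm zero_hom Z A by auto
  have "biproduct X A Z A (Idm X A) (Mzero X Z A) (Idm X A) (Mzero X A Z)"
    unfolding biproduct_def
    using h idl[OF h(1)] comp_zero_r[OF h(3) Z(1)] comp_zero_r[OF h(1) Z(1)] comp_zero_l[OF h(1) Z(1)]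
      comp_zero_r[OF h(2) A] madd_rzero[OF h(1)] Z(2) by simp
  thus ?thesis using rlz_split A Z by blast
qed

lemma triv2: assumes Z: "Z \<in> Ob X" "Idm X Z = Mzero X Z Z" and A: "A \<in> Ob X"
  shows "Rlz X A Z (Ezero X A Z) (Mzero X Z A) (Idm X A)"
proof -
  have h: "Idm X A \<in> Hom X A A" "Mzero X Z A \<in> Hom X Z A" "Mzero X A Z \<in> Hom X A Z"
    using idm zero_hom Z A by auto
  have "biproduct X Z A A (Mzero X Z A) (Idm X A) (Mzero X A Z) (Idm X A)"
    unfolding biproduct_def
    using h idl[OF h(1)] comp_zero_r[OF h(3) Z(1)] comp_zero_r[OF h(1) Z(1)] comp_zero_l[OF h(1) Z(1)]
      comp_zero_r[OF h(2) A] madd_lzero[OF h(1)] Z(2) by simp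
  thus ?thesis using rlz_split A Z by blast
qed

lemma yx_zero: assumes r: "Rlz X C A d x y" shows "Cmp X y x = Mzero X A C"
proof -
  obtain Z where Z: "Z \<in> Ob X" "Idm X Z = Mzero X Z Z" using zero_obj by blast
  have h: "x \<in> Hom X A (Cod X x)" "y \<in> Hom X (Cod X x) C" using rlz_hom[OF r] by auto
  have A: "A \<in> Ob X" "C \<in> Ob X" using rlzD[OF r] by auto
  have t: "Rlz X Z A (Ezero X Z A) (Idm X A) (Mzero X A Z)" using triv1 Z A by blast
  have "Cod X (Idm X A) = A" using homD[OF idm[OF A(1)]] by blast
  then obtain c where c: "c \<in> Hom X Z C" "Cmp X c (Mzero X A Z) = Cmp X y x"
    using et3[OF t r, of "Idm X A" x] idm[OF A(1)] h idr[OF h(1)] by auto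
  thus ?thesis using comp_zero_r[OF c(1) A(1)] by simp
qed

lemma weak_kernel: assumes r: "Rlz X C A d x y" and t: "t \<in> Hom X Y (Cod X x)"
  and e: "Cmp X y t = Mzero X Y C" shows "\<exists>u\<in>Hom X Y A. Cmp X x u = t"
proof -
  obtain Z where Z: "Z \<in> Ob X" "Idm X Z = Mzero X Z Z" using zero_obj by blast
  have Y: "Y \<in> Ob X" using hom_obj[OF t] by blast
  have A: "A \<in> Ob X" "C \<in> Ob X" using rlzD[OF r] by auto
  have tr: "Rlz X Z Y (Ezero X Z Y) (Idm X Y) (Mzero X Y Z)" using triv1 Z Y by blast
  have cy: "Cod X (Idm X Y) = Y" using homD[OF idm[OF Y]] by blast
  have z: "Mzero X Z C \<in> Hom X Z C" using zero_hom Z A by blast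
  have "Cmp X (Mzero X Z C) (Mzero X Y Z) = Mzero X Y C" using comp_zero_l zero_hom Z Y A by blast
  then obtain a where "a \<in> Hom X Y A" "Cmp X x a = Cmp X t (Idm X Y)"
    using et3op[OF tr r, of t "Mzero X Z C"] cy t z e by auto
  thus ?thesis using idr t by metis
qed

lemma weak_cokernel: assumes r: "Rlz X C A d x y" and w: "w \<in> Hom X (Cod X x) Y"
  and e: "Cmp X w x = Mzero X A Y" shows "\<exists>c\<in>Hom X C Y. Cmp X c y = w"
proof -
  obtain Z where Z: "Z \<in> Ob X" "Idm X Z = Mzero X Z Z" using zero_obj by blast
  have Y: "Y \<in> Ob X" using hom_obj[OF w] by blast
  have A: "A \<in> Ob X" "C \<in> Ob X" using rlzD[OF r] by auto
  have tr: "Rlz X Y Z (Ezero X Y Z) (Mzero X Z Y) (Idm X Y)" using triv2 Z Y by blast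
  have cy: "Cod X (Mzero X Z Y) = Y" using homD[OF zero_hom[OF Z(1) Y]] by blast
  have z: "Mzero X A Z \<in> Hom X A Z" using zero_hom Z A by blast
  have "Cmp X (Mzero X Z Y) (Mzero X A Z) = Mzero X A Y" using comp_zero_l zero_hom Z Y A by blast
  then obtain c where "c \<in> Hom X C Y" "Cmp X c y = Cmp X (Idm X Y) w"
    using et3[OF r tr, of "Mzero X A Z" w] cy w z e by auto
  thus ?thesis using idl w by metis
qed

lemma push_x_zero: assumes r: "Rlz X C A d x y" shows "Push X C x d = Ezero X C (Cod X x)"
proof -
  obtain Z where Z: "Z \<in> Ob X" "Idm X Z = Mzero X Z Z" using zero_obj by blast
  have h: "x \<in> Hom X A (Cod X x)" using rlz_hom[OF r] by auto
  have B: "Cod X x \<in> Ob X" using hom_obj[OF h] by blast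
  have tr: "Rlz X Z (Cod X x) (Ezero X Z (Cod X x)) (Idm X (Cod X x)) (Mzero X (Cod X x) Z)"
    using triv1 Z B by blast
  have cy: "Cod X (Idm X (Cod X x)) = Cod X x" using homD[OF idm[OF B]] by blast
  obtain c where "c \<in> Hom X C Z" "Push X C x d = Pull X c (Cod X x) (Ezero X Z (Cod X x))"
    using et3[OF r tr, of x "Idm X (Cod X x)"] cy h idm[OF B] by auto
  thus ?thesis using pull_zero B by simp
qed

lemma pull_y_zero: assumes r: "Rlz X C A d x y" shows "Pull X y A d = Ezero X (Cod X x) A"
proof -
  obtain Z where Z: "Z \<in> Ob X" "Idm X Z = Mzero X Z Z" using zero_obj by blast
  have h: "y \<in> Hom X (Cod X x) C" using rlz_hom[OF r] by auto
  have B: "Cod X x \<in> Ob X" "A \<in> Ob X" using hom_obj[OF h] rlzD[OF r] by auto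
  have tr: "Rlz X (Cod X x) Z (Ezero X (Cod X x) Z) (Mzero X Z (Cod X x)) (Idm X (Cod X x))"
    using triv2 Z B by blast
  have cy: "Cod X (Mzero X Z (Cod X x)) = Cod X x" using homD[OF zero_hom[OF Z(1) B(1)]] by blast
  obtain a where "a \<in> Hom X Z A" "Push X (Cod X x) a (Ezero X (Cod X x) Z) = Pull X y A d"
    using et3op[OF tr r, of "Idm X (Cod X x)" y] cy h idm[OF B(1)] by auto
  thus ?thesis using push_zero B by metis
qed

lemma push_factor: assumes r: "Rlz X C A d x y" and a: "a \<in> Hom X A Y"
  and e: "Push X C a d = Ezero X C Y" shows "\<exists>h\<in>Hom X (Cod X x) Y. Cmp X h x = a"
proof -
  obtain Z where Z: "Z \<in> Ob X" "Idm X Z = Mzero X Z Z" using zero_obj by blast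
  have Y: "Y \<in> Ob X" using hom_obj[OF a] by blast
  have A: "A \<in> Ob X" "C \<in> Ob X" using rlzD[OF r] by auto
  have tr: "Rlz X Z Y (Ezero X Z Y) (Idm X Y) (Mzero X Y Z)" using triv1 Z Y by blast
  have cy: "Cod X (Idm X Y) = Y" using homD[OF idm[OF Y]] by blast
  have z: "Mzero X C Z \<in> Hom X C Z" using zero_hom Z A by blast
  have "Pull X (Mzero X C Z) Y (Ezero X Z Y) = Ezero X C Y" using pull_zero z Y by blast
  then obtain b where "b \<in> Hom X (Cod X x) Y" "Cmp X b x = Cmp X (Idm X Y) a"
    using rlz_mor[OF r tr a z] cy e by auto
  thus ?thesis using idl a by metis
qed

lemma pull_factor: assumes r: "Rlz X C A d x y" and c: "c \<in> Hom X Y C"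
  and e: "Pull X c A d = Ezero X Y A" shows "\<exists>h\<in>Hom X Y (Cod X x). Cmp X y h = c"
proof -
  obtain Z where Z: "Z \<in> Ob X" "Idm X Z = Mzero X Z Z" using zero_obj by blast
  have Y: "Y \<in> Ob X" using hom_obj[OF c] by blast
  have A: "A \<in> Ob X" "C \<in> Ob X" using rlzD[OF r] by auto
  have tr: "Rlz X Y Z (Ezero X Y Z) (Mzero X Z Y) (Idm X Y)" using triv2 Z Y by blast
  have cy: "Cod X (Mzero X Z Y) = Y" using homD[OF zero_hom[OF Z(1) Y]] by blast
  have z: "Mzero X Z A \<in> Hom X Z A" using zero_hom Z A by blast
  have "Push X Y (Mzero X Z A) (Ezero X Y Z) = Ezero X Y A" using push_zero z Y by blast
  then obtain b where "b \<in> Hom X Y (Cod X x)" "Cmp X y b = Cmp X c (Idm X Y)"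
    using rlz_mor[OF tr r z c] cy e by auto
  thus ?thesis using idr c by metis
qed


lemma monic_iff: assumes r: "Rlz X C A d x y"
  shows "D_monic X D x \<longleftrightarrow> (\<forall>Y\<in>D. \<forall>a\<in>Hom X A Y. Push X C a d = Ezero X C Y)"
proof
  assume m: "D_monic X D x"
  have dx: "Dom X x = A" and hx: "x \<in> Hom X A (Cod X x)" and C: "C \<in> Ob X" and d: "d \<in> Ext X C A"
    using rlzD[OF r] rlz_hom[OF r] by auto
  show "\<forall>Y\<in>D. \<forall>a\<in>Hom X A Y. Push X C a d = Ezero X C Y"
  proof (intro ballI)
    fix Y a assume Y: "Y \<in> D" and a: "a \<in> Hom X A Y"
    obtain h where h: "h \<in> Hom X (Cod X x) Y" "Cmp X h x = a" using m Y a dx unfolding D_monic_def by auto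
    have "Push X C a d = Push X C h (Push X C x d)" using push_comp[OF hx h(1) C d] h(2) by simp
    also have "\<dots> = Ezero X C Y" using push_x_zero[OF r] push_zero[OF h(1) C] by simp
    finally show "Push X C a d = Ezero X C Y" .
  qed
next
  assume p: "\<forall>Y\<in>D. \<forall>a\<in>Hom X A Y. Push X C a d = Ezero X C Y"
  have dx: "Dom X x = A" using rlzD[OF r] by auto
  show "D_monic X D x" unfolding D_monic_def dx
    using p push_factor[OF r] by blast
qed

lemma epic_iff: assumes r: "Rlz X C A d x y"
  shows "D_epic X D y \<longleftrightarrow> (\<forall>Y\<in>D. \<forall>c\<in>Hom X Y C. Pull X c A d = Ezero X Y A)"
proof
  assume m: "D_epic X D y"
  have cy: "Cod X y = C" and dy: "Dom X y = Cod X x" and hy: "y \<in> Hom X (Cod X x) C" and A: "A \<in> Ob X" and d: "d \<in> Ext X C A"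
    using rlzD[OF r] rlz_hom[OF r] by auto
  show "\<forall>Y\<in>D. \<forall>c\<in>Hom X Y C. Pull X c A d = Ezero X Y A"
  proof (intro ballI)
    fix Y c assume Y: "Y \<in> D" and c: "c \<in> Hom X Y C"
    obtain h where h: "h \<in> Hom X Y (Cod X x)" "Cmp X y h = c" using m Y c cy dy unfolding D_epic_def by auto
    have "Pull X c A d = Pull X h A (Pull X y A d)" using pull_comp[OF hy h(1) A d] h(2) by simp
    also have "\<dots> = Ezero X Y A" using pull_y_zero[OF r] pull_zero[OF h(1) A] by simp
    finally show "Pull X c A d = Ezero X Y A" .
  qed
next
  assume p: "\<forall>Y\<in>D. \<forall>c\<in>Hom X Y C. Pull X c A d = Ezero X Y A"
  have cy: "Cod X y = C" and dy: "Dom X y = Cod X x" using rlzD[OF r] by auto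
  show "D_epic X D y" unfolding D_epic_def cy dy
    using p pull_factor[OF r] by blast
qed

lemma IExt_obj: assumes "d \<in> IExt X D C A" shows "C \<in> Ob X \<and> A \<in> Ob X \<and> d \<in> Ext X C A"
proof -
  obtain x y where "Rlz X C A d x y" using assms unfolding IExt_def by blast
  thus ?thesis using rlzD by blast
qed
lemma PExt_obj: assumes "d \<in> PExt X D C A" shows "C \<in> Ob X \<and> A \<in> Ob X \<and> d \<in> Ext X C A"
proof -
  obtain x y where "Rlz X C A d x y" using assms unfolding PExt_def by blast
  thus ?thesis using rlzD by blast
qed

lemma IExt_iff: assumes "C \<in> Ob X" "A \<in> Ob X"
  shows "d \<in> IExt X D C A \<longleftrightarrow> d \<in> Ext X C A \<and> (\<forall>Y\<in>D. \<forall>a\<in>Hom X A Y. Push X C a d = Ezero X C Y)"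
proof
  assume "d \<in> IExt X D C A"
  then obtain x y where "d \<in> Ext X C A" "Rlz X C A d x y" "D_monic X D x" unfolding IExt_def by blast
  thus "d \<in> Ext X C A \<and> (\<forall>Y\<in>D. \<forall>a\<in>Hom X A Y. Push X C a d = Ezero X C Y)" using monic_iff by blast
next
  assume a: "d \<in> Ext X C A \<and> (\<forall>Y\<in>D. \<forall>a\<in>Hom X A Y. Push X C a d = Ezero X C Y)"
  then obtain x y where r: "Rlz X C A d x y" using rlz_ex assms by blast
  thus "d \<in> IExt X D C A" using a monic_iff[OF r] unfolding IExt_def by blast
qed

lemma PExt_iff: assumes "C \<in> Ob X" "A \<in> Ob X"
  shows "d \<in> PExt X D C A \<longleftrightarrow> d \<in> Ext X C A \<and> (\<forall>Y\<in>D. \<forall>c\<in>Hom X Y C. Pull X c A d = Ezero X Y A)"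
proof
  assume "d \<in> PExt X D C A"
  then obtain x y where "d \<in> Ext X C A" "Rlz X C A d x y" "D_epic X D y" unfolding PExt_def by blast
  thus "d \<in> Ext X C A \<and> (\<forall>Y\<in>D. \<forall>c\<in>Hom X Y C. Pull X c A d = Ezero X Y A)" using epic_iff by blast
next
  assume a: "d \<in> Ext X C A \<and> (\<forall>Y\<in>D. \<forall>c\<in>Hom X Y C. Pull X c A d = Ezero X Y A)"
  then obtain x y where r: "Rlz X C A d x y" using rlz_ex assms by blast
  thus "d \<in> PExt X D C A" using a epic_iff[OF r] unfolding PExt_def by blast
qed

lemma I_zero: assumes "C \<in> Ob X" "A \<in> Ob X" shows "Ezero X C A \<in> IExt X D C A"
  using IExt_iff[OF assms] e_zero[OF assms] push_zero assms by blast

lemma P_zero: assumes "C \<in> Ob X" "A \<in> Ob X" shows "Ezero X C A \<in> PExt X D C A"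
  using PExt_iff[OF assms] e_zero[OF assms] pull_zero assms by blast

lemma I_add: assumes d: "d \<in> IExt X D C A" and d': "d' \<in> IExt X D C A"
  shows "Eadd X C A d d' \<in> IExt X D C A"
proof -
  have o: "C \<in> Ob X" "A \<in> Ob X" "d \<in> Ext X C A" "d' \<in> Ext X C A" using IExt_obj[OF d] IExt_obj[OF d'] by auto
  have p: "\<forall>Y\<in>D. \<forall>a\<in>Hom X A Y. Push X C a d = Ezero X C Y"
      "\<forall>Y\<in>D. \<forall>a\<in>Hom X A Y. Push X C a d' = Ezero X C Y"
    using IExt_iff[OF o(1,2)] d d' by auto
  have "\<forall>Y\<in>D. \<forall>a\<in>Hom X A Y. Push X C a (Eadd X C A d d') = Ezero X C Y"
  proof (intro ballI)
    fix Y a assume Y: "Y \<in> D" and a: "a \<in> Hom X A Y"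
    have Yo: "Y \<in> Ob X" using hom_obj[OF a] by blast
    show "Push X C a (Eadd X C A d d') = Ezero X C Y"
      using push_add[OF a o(1,3,4)] p Y a e_lzero[OF o(1) Yo e_zero[OF o(1) Yo]] by simp
  qed
  thus ?thesis using IExt_iff[OF o(1,2)] e_add o by blast
qed

lemma I_neg: assumes d: "d \<in> IExt X D C A"
  shows "Eneg X C A d \<in> IExt X D C A"
proof -
  have o: "C \<in> Ob X" "A \<in> Ob X" "d \<in> Ext X C A" using IExt_obj[OF d] by auto
  have n: "Eneg X C A d \<in> Ext X C A" using e_neg o by blast
  have p: "\<forall>Y\<in>D. \<forall>a\<in>Hom X A Y. Push X C a d = Ezero X C Y"
    using IExt_iff[OF o(1,2)] d by auto
  have "\<forall>Y\<in>D. \<forall>a\<in>Hom X A Y. Push X C a (Eneg X C A d) = Ezero X C Y"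
  proof (intro ballI)
    fix Y a assume Y: "Y \<in> D" and a: "a \<in> Hom X A Y"
    have Yo: "Y \<in> Ob X" using hom_obj[OF a] by blast
    have "Ezero X C Y = Push X C a (Eadd X C A (Eneg X C A d) d)"
      using e_linv o push_zero a by simp
    also have "\<dots> = Eadd X C Y (Push X C a (Eneg X C A d)) (Push X C a d)"
      using push_add[OF a o(1) n o(3)] .
    also have "\<dots> = Push X C a (Eneg X C A d)"
      using p Y a e_rzero[OF o(1) Yo push_ext[OF a o(1) n]] by simp
    finally show "Push X C a (Eneg X C A d) = Ezero X C Y" by simp
  qed
  thus ?thesis using IExt_iff[OF o(1,2)] n by blast
qed

lemma I_pull: assumes c: "c \<in> Hom X C' C" and d: "d \<in> IExt X D C A"
  shows "Pull X c A d \<in> IExt X D C' A"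
proof -
  have o: "C \<in> Ob X" "A \<in> Ob X" "d \<in> Ext X C A" "C' \<in> Ob X" using IExt_obj[OF d] hom_obj[OF c] by auto
  have p: "\<forall>Y\<in>D. \<forall>a\<in>Hom X A Y. Push X C a d = Ezero X C Y"
    using IExt_iff[OF o(1,2)] d by auto
  have "\<forall>Y\<in>D. \<forall>a\<in>Hom X A Y. Push X C' a (Pull X c A d) = Ezero X C' Y"
  proof (intro ballI)
    fix Y a assume Y: "Y \<in> D" and a: "a \<in> Hom X A Y"
    have Yo: "Y \<in> Ob X" using hom_obj[OF a] by blast
    show "Push X C' a (Pull X c A d) = Ezero X C' Y"
      using push_pull[OF a c o(3)] p Y a pull_zero[OF c Yo] by simp
  qed
  thus ?thesis using IExt_iff[OF o(4,2)] pull_ext[OF c o(2,3)] by blast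
qed

lemma I_push: assumes a': "a' \<in> Hom X A A'" and d: "d \<in> IExt X D C A"
  shows "Push X C a' d \<in> IExt X D C A'"
proof -
  have o: "C \<in> Ob X" "A \<in> Ob X" "d \<in> Ext X C A" "A' \<in> Ob X" using IExt_obj[OF d] hom_obj[OF a'] by auto
  have p: "\<forall>Y\<in>D. \<forall>a\<in>Hom X A Y. Push X C a d = Ezero X C Y"
    using IExt_iff[OF o(1,2)] d by auto
  have "\<forall>Y\<in>D. \<forall>a\<in>Hom X A' Y. Push X C a (Push X C a' d) = Ezero X C Y"
  proof (intro ballI)
    fix Y a assume Y: "Y \<in> D" and a: "a \<in> Hom X A' Y"
    show "Push X C a (Push X C a' d) = Ezero X C Y"
      using push_comp[OF a' a o(1,3)] p Y comp[OF a' a] by simp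
  qed
  thus ?thesis using IExt_iff[OF o(1,4)] push_ext[OF a' o(1,3)] by blast
qed

lemma P_add: assumes d: "d \<in> PExt X D C A" and d': "d' \<in> PExt X D C A"
  shows "Eadd X C A d d' \<in> PExt X D C A"
proof -
  have o: "C \<in> Ob X" "A \<in> Ob X" "d \<in> Ext X C A" "d' \<in> Ext X C A" using PExt_obj[OF d] PExt_obj[OF d'] by auto
  have p: "\<forall>Y\<in>D. \<forall>c\<in>Hom X Y C. Pull X c A d = Ezero X Y A"
      "\<forall>Y\<in>D. \<forall>c\<in>Hom X Y C. Pull X c A d' = Ezero X Y A"
    using PExt_iff[OF o(1,2)] d d' by auto
  have "\<forall>Y\<in>D. \<forall>c\<in>Hom X Y C. Pull X c A (Eadd X C A d d') = Ezero X Y A"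
  proof (intro ballI)
    fix Y c assume Y: "Y \<in> D" and c: "c \<in> Hom X Y C"
    have Yo: "Y \<in> Ob X" using hom_obj[OF c] by blast
    show "Pull X c A (Eadd X C A d d') = Ezero X Y A"
      using pull_add[OF c o(2,3,4)] p Y c e_lzero[OF Yo o(2) e_zero[OF Yo o(2)]] by simp
  qed
  thus ?thesis using PExt_iff[OF o(1,2)] e_add o by blast
qed

lemma P_neg: assumes d: "d \<in> PExt X D C A"
  shows "Eneg X C A d \<in> PExt X D C A"
proof -
  have o: "C \<in> Ob X" "A \<in> Ob X" "d \<in> Ext X C A" using PExt_obj[OF d] by auto
  have n: "Eneg X C A d \<in> Ext X C A" using e_neg o by blast
  have p: "\<forall>Y\<in>D. \<forall>c\<in>Hom X Y C. Pull X c A d = Ezero X Y A"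
    using PExt_iff[OF o(1,2)] d by auto
  have "\<forall>Y\<in>D. \<forall>c\<in>Hom X Y C. Pull X c A (Eneg X C A d) = Ezero X Y A"
  proof (intro ballI)
    fix Y c assume Y: "Y \<in> D" and c: "c \<in> Hom X Y C"
    have Yo: "Y \<in> Ob X" using hom_obj[OF c] by blast
    have "Ezero X Y A = Pull X c A (Eadd X C A (Eneg X C A d) d)"
      using e_linv o pull_zero c by simp
    also have "\<dots> = Eadd X Y A (Pull X c A (Eneg X C A d)) (Pull X c A d)"
      using pull_add[OF c o(2) n o(3)] .
    also have "\<dots> = Pull X c A (Eneg X C A d)"
      using p Y c e_rzero[OF Yo o(2) pull_ext[OF c o(2) n]] by simp
    finally show "Pull X c A (Eneg X C A d) = Ezero X Y A" by simp
  qed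
  thus ?thesis using PExt_iff[OF o(1,2)] n by blast
qed

lemma P_push: assumes a: "a \<in> Hom X A A'" and d: "d \<in> PExt X D C A"
  shows "Push X C a d \<in> PExt X D C A'"
proof -
  have o: "C \<in> Ob X" "A \<in> Ob X" "d \<in> Ext X C A" "A' \<in> Ob X" using PExt_obj[OF d] hom_obj[OF a] by auto
  have p: "\<forall>Y\<in>D. \<forall>c\<in>Hom X Y C. Pull X c A d = Ezero X Y A"
    using PExt_iff[OF o(1,2)] d by auto
  have "\<forall>Y\<in>D. \<forall>c\<in>Hom X Y C. Pull X c A' (Push X C a d) = Ezero X Y A'"
  proof (intro ballI)
    fix Y c assume Y: "Y \<in> D" and c: "c \<in> Hom X Y C"
    have Yo: "Y \<in> Ob X" using hom_obj[OF c] by blast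
    show "Pull X c A' (Push X C a d) = Ezero X Y A'"
      using push_pull[OF a c o(3)] p Y c push_zero[OF a Yo] by simp
  qed
  thus ?thesis using PExt_iff[OF o(1,4)] push_ext[OF a o(1,3)] by blast
qed

lemma P_pull: assumes c': "c' \<in> Hom X C' C" and d: "d \<in> PExt X D C A"
  shows "Pull X c' A d \<in> PExt X D C' A"
proof -
  have o: "C \<in> Ob X" "A \<in> Ob X" "d \<in> Ext X C A" "C' \<in> Ob X" using PExt_obj[OF d] hom_obj[OF c'] by auto
  have p: "\<forall>Y\<in>D. \<forall>c\<in>Hom X Y C. Pull X c A d = Ezero X Y A"
    using PExt_iff[OF o(1,2)] d by auto
  have "\<forall>Y\<in>D. \<forall>c\<in>Hom X Y C'. Pull X c A (Pull X c' A d) = Ezero X Y A"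
  proof (intro ballI)
    fix Y c assume Y: "Y \<in> D" and c: "c \<in> Hom X Y C'"
    show "Pull X c A (Pull X c' A d) = Ezero X Y A"
      using pull_comp[OF c' c o(2,3)] p Y comp[OF c c'] by simp
  qed
  thus ?thesis using PExt_iff[OF o(4,2)] pull_ext[OF c' o(2,3)] by blast
qed


lemma restr_extri:
  assumes sub: "\<And>C A. F C A \<subseteq> Ext X C A"
  and zero: "\<And>C A. C \<in> Ob X \<Longrightarrow> A \<in> Ob X \<Longrightarrow> Ezero X C A \<in> F C A"
  and add: "\<And>C A d d'. d \<in> F C A \<Longrightarrow> d' \<in> F C A \<Longrightarrow> Eadd X C A d d' \<in> F C A"
  and neg: "\<And>C A d. d \<in> F C A \<Longrightarrow> Eneg X C A d \<in> F C A"
  and pull: "\<And>C C' A c d. c \<in> Hom X C' C \<Longrightarrow> d \<in> F C A \<Longrightarrow> Pull X c A d \<in> F C' A"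
  and push: "\<And>C A A' a d. a \<in> Hom X A A' \<Longrightarrow> d \<in> F C A \<Longrightarrow> Push X C a d \<in> F C A'"
  and et4: "ET4 (restr X F)" and et4op: "ET4op (restr X F)"
  shows "extriangulated (restr X F)"
proof -
  have ad: "is_additive (restr X F)" using ext by (simp add: extriangulated_def)
  have e1: "ET1 (restr X F)"
    unfolding ET1_def restr_simps restr_Hom
  proof (intro conjI ballI allI impI)
    show "\<And>C A. C \<in> Ob X \<Longrightarrow> A \<in> Ob X \<Longrightarrow> Ezero X C A \<in> F C A" by (rule zero)
    show "\<And>C A d d'. d \<in> F C A \<Longrightarrow> d' \<in> F C A \<Longrightarrow> Eadd X C A d d' \<in> F C A" by (rule add)
    show "\<And>C A d. d \<in> F C A \<Longrightarrow> Eneg X C A d \<in> F C A" by (rule neg)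
    show "\<And>C A d d' d''. C \<in> Ob X \<Longrightarrow> A \<in> Ob X \<Longrightarrow> d \<in> F C A \<Longrightarrow> d' \<in> F C A \<Longrightarrow> d'' \<in> F C A \<Longrightarrow>
      Eadd X C A (Eadd X C A d d') d'' = Eadd X C A d (Eadd X C A d' d'')"
      using e_assoc sub by blast
    show "\<And>C A d d'. C \<in> Ob X \<Longrightarrow> A \<in> Ob X \<Longrightarrow> d \<in> F C A \<Longrightarrow> d' \<in> F C A \<Longrightarrow> Eadd X C A d d' = Eadd X C A d' d"
      using e_comm sub by blast
    show "\<And>C A d. C \<in> Ob X \<Longrightarrow> A \<in> Ob X \<Longrightarrow> d \<in> F C A \<Longrightarrow> Eadd X C A (Ezero X C A) d = d"
      using e_lzero sub by blast
    show "\<And>C A d. C \<in> Ob X \<Longrightarrow> A \<in> Ob X \<Longrightarrow> d \<in> F C A \<Longrightarrow> Eadd X C A (Eneg X C A d) d = Ezero X C A"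
      using e_linv sub by blast
    show "\<And>A C C' c d. A \<in> Ob X \<Longrightarrow> c \<in> Hom X C' C \<Longrightarrow> d \<in> F C A \<Longrightarrow> Pull X c A d \<in> F C' A"
      by (rule pull)
    show "\<And>A C C' c d d'. A \<in> Ob X \<Longrightarrow> c \<in> Hom X C' C \<Longrightarrow> d \<in> F C A \<Longrightarrow> d' \<in> F C A \<Longrightarrow>
      Pull X c A (Eadd X C A d d') = Eadd X C' A (Pull X c A d) (Pull X c A d')"
      using pull_add sub by blast
    show "\<And>A C d. A \<in> Ob X \<Longrightarrow> C \<in> Ob X \<Longrightarrow> d \<in> F C A \<Longrightarrow> Pull X (Idm X C) A d = d"
      using pull_id sub by blast
    show "\<And>A C C' C'' c c' d. A \<in> Ob X \<Longrightarrow> c \<in> Hom X C' C \<Longrightarrow> c' \<in> Hom X C'' C' \<Longrightarrow> d \<in> F C A \<Longrightarrow>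
      Pull X (Cmp X c c') A d = Pull X c' A (Pull X c A d)"
      using pull_comp sub by blast
    show "\<And>A C C' c c' d. A \<in> Ob X \<Longrightarrow> c \<in> Hom X C' C \<Longrightarrow> c' \<in> Hom X C' C \<Longrightarrow> d \<in> F C A \<Longrightarrow>
      Pull X (Madd X c c') A d = Eadd X C' A (Pull X c A d) (Pull X c' A d)"
      using E1_5 sub by blast
    show "\<And>C A A' a d. C \<in> Ob X \<Longrightarrow> a \<in> Hom X A A' \<Longrightarrow> d \<in> F C A \<Longrightarrow> Push X C a d \<in> F C A'"
      by (rule push)
    show "\<And>C A A' a d d'. C \<in> Ob X \<Longrightarrow> a \<in> Hom X A A' \<Longrightarrow> d \<in> F C A \<Longrightarrow> d' \<in> F C A \<Longrightarrow>
      Push X C a (Eadd X C A d d') = Eadd X C A' (Push X C a d) (Push X C a d')"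
      using push_add sub by blast
    show "\<And>A C d. A \<in> Ob X \<Longrightarrow> C \<in> Ob X \<Longrightarrow> d \<in> F C A \<Longrightarrow> Push X C (Idm X A) d = d"
      using push_id sub by blast
    show "\<And>C A A' A'' a a' d. C \<in> Ob X \<Longrightarrow> a \<in> Hom X A A' \<Longrightarrow> a' \<in> Hom X A' A'' \<Longrightarrow> d \<in> F C A \<Longrightarrow>
      Push X C (Cmp X a' a) d = Push X C a' (Push X C a d)"
      using push_comp sub by blast
    show "\<And>C A A' a a' d. C \<in> Ob X \<Longrightarrow> a \<in> Hom X A A' \<Longrightarrow> a' \<in> Hom X A A' \<Longrightarrow> d \<in> F C A \<Longrightarrow>
      Push X C (Madd X a a') d = Eadd X C A' (Push X C a d) (Push X C a' d)"
      using E1_9 sub by blast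
    show "\<And>A A' C C' a c d. a \<in> Hom X A A' \<Longrightarrow> c \<in> Hom X C' C \<Longrightarrow> d \<in> F C A \<Longrightarrow>
      Push X C' a (Pull X c A d) = Pull X c A' (Push X C a d)"
      using push_pull sub by blast
  qed
  have e2: "ET2 (restr X F)"
    unfolding ET2_def restr_simps restr_Hom restr_biproduct restr_seq_equiv
    apply (intro conjI)
    subgoal using rlzD by blast
    subgoal using rlz_ex sub by blast
    subgoal using rlz_equiv by blast
    subgoal using rlz_mor by blast
    subgoal using rlz_split zero by blast
    subgoal
    proof (intro allI impI)
    fix C A d x y C' A' d' x' y' SA iA iA' pA pA' SB iB iB' pB pB' SC iC iC' pC pC'
    assume r: "d \<in> F C A \<and> Rlz X C A d x y" and r': "d' \<in> F C' A' \<and> Rlz X C' A' d' x' y'"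
      and bA: "biproduct X A A' SA iA iA' pA pA'" and bB: "biproduct X (Cod X x) (Cod X x') SB iB iB' pB pB'"
      and bC: "biproduct X C C' SC iC iC' pC pC'"
    have h: "iA \<in> Hom X A SA" "iA' \<in> Hom X A' SA" "pC \<in> Hom X SC C" "pC' \<in> Hom X SC C'"
      using bA bC unfolding biproduct_def by auto
    have "Eadd X SC SA (Push X SC iA (Pull X pC A d)) (Push X SC iA' (Pull X pC' A' d')) \<in> F SC SA"
      using add[OF push[OF h(1) pull[OF h(3) conjunct1[OF r]]] push[OF h(2) pull[OF h(4) conjunct1[OF r']]]] .
    moreover have "Rlz X SC SA
          (Eadd X SC SA (Push X SC iA (Pull X pC A d)) (Push X SC iA' (Pull X pC' A' d')))
          (Madd X (Cmp X iB (Cmp X x pA)) (Cmp X iB' (Cmp X x' pA')))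
          (Madd X (Cmp X iC (Cmp X y pB)) (Cmp X iC' (Cmp X y' pB')))"
      using E2_6[rule_format, OF conjunct2[OF r] conjunct2[OF r'] bA bB bC] .
    ultimately show "Eadd X SC SA (Push X SC iA (Pull X pC A d)) (Push X SC iA' (Pull X pC' A' d')) \<in> F SC SA \<and>
       Rlz X SC SA
          (Eadd X SC SA (Push X SC iA (Pull X pC A d)) (Push X SC iA' (Pull X pC' A' d')))
          (Madd X (Cmp X iB (Cmp X x pA)) (Cmp X iB' (Cmp X x' pA')))
          (Madd X (Cmp X iC (Cmp X y pB)) (Cmp X iC' (Cmp X y' pB')))" by blast
    qed
    done
  have e3: "ET3 (restr X F)" unfolding ET3_def restr_simps restr_Hom using et3 by blast
  have e3op: "ET3op (restr X F)" unfolding ET3op_def restr_simps restr_Hom using et3op by blast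
  show ?thesis unfolding extriangulated_def using ad e1 e2 e3 e3op et4 et4op by blast
qed


lemma mneg_cancel: assumes m: "m \<in> Hom X A B" and t: "t \<in> Hom X A B"
  shows "Madd X m (Madd X (Mneg X m) t) = t"
proof -
  have n: "Mneg X m \<in> Hom X A B" using mneg_hom m by blast
  have "Madd X m (Madd X (Mneg X m) t) = Madd X (Madd X m (Mneg X m)) t" using madd_assoc m n t by metis
  also have "\<dots> = t" using madd_comm[OF m n] madd_linv[OF m] madd_lzero[OF t] by simp
  finally show ?thesis .
qed

lemma post_zero: assumes e: "e \<in> Hom X B C" and m: "m \<in> Hom X A B" and t: "t \<in> Hom X A B"
  and eq: "Cmp X e m = Cmp X e t" shows "Cmp X e (Madd X (Mneg X m) t) = Mzero X A C"
proof -
  have n: "Mneg X m \<in> Hom X A B" using mneg_hom m by blast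
  have A: "A \<in> Ob X" using homD m by blast
  have "Cmp X e (Madd X (Mneg X m) t) = Madd X (Cmp X e (Mneg X m)) (Cmp X e m)"
    using distr[OF n t e] eq by simp
  also have "\<dots> = Cmp X e (Madd X (Mneg X m) m)" using distr[OF n m e] by simp
  also have "\<dots> = Mzero X A C" using madd_linv[OF m] comp_zero_r[OF e A] by simp
  finally show ?thesis .
qed

lemma pre_zero: assumes e: "e \<in> Hom X A B" and m: "m \<in> Hom X B C" and t: "t \<in> Hom X B C"
  and eq: "Cmp X m e = Cmp X t e" shows "Cmp X (Madd X (Mneg X m) t) e = Mzero X A C"
proof -
  have n: "Mneg X m \<in> Hom X B C" using mneg_hom m by blast
  have C: "C \<in> Ob X" using homD m by blast
  have "Cmp X (Madd X (Mneg X m) t) e = Madd X (Cmp X (Mneg X m) e) (Cmp X m e)"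
    using distl[OF e n t] eq by simp
  also have "\<dots> = Cmp X (Madd X (Mneg X m) m) e" using distl[OF e n m] by simp
  also have "\<dots> = Mzero X A C" using madd_linv[OF m] comp_zero_l[OF e C] by simp
  finally show ?thesis .
qed

lemma monic_comp: assumes f: "f \<in> Hom X A B" and g: "g \<in> Hom X B C"
  and mf: "D_monic X D f" and mg: "D_monic X D g" shows "D_monic X D (Cmp X g f)"
  unfolding D_monic_def
proof (intro ballI)
  fix Y t assume Y: "Y \<in> D" and t: "t \<in> Hom X (Dom X (Cmp X g f)) (Y)"
  have gf: "Cmp X g f \<in> Hom X A C" using comp f g by blast
  have t': "t \<in> Hom X A Y" using t homD gf by metis
  obtain h1 where h1: "h1 \<in> Hom X B Y" "Cmp X h1 f = t" using mf Y t' homD f unfolding D_monic_def by metis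
  obtain h2 where h2: "h2 \<in> Hom X C Y" "Cmp X h2 g = h1" using mg Y h1 homD g unfolding D_monic_def by metis
  have "Cmp X h2 (Cmp X g f) = t" using assoc[OF f g h2(1)] h1 h2 by simp
  thus "\<exists>h\<in>Hom X (Cod X (Cmp X g f)) Y. Cmp X h (Cmp X g f) = t" using h2 homD gf by metis
qed

lemma epic_comp: assumes f: "f \<in> Hom X A B" and g: "g \<in> Hom X B C"
  and mf: "D_epic X D f" and mg: "D_epic X D g" shows "D_epic X D (Cmp X g f)"
  unfolding D_epic_def
proof (intro ballI)
  fix Y t assume Y: "Y \<in> D" and t: "t \<in> Hom X Y (Cod X (Cmp X g f))"
  have gf: "Cmp X g f \<in> Hom X A C" using comp f g by blast
  have t': "t \<in> Hom X Y C" using t homD gf by metis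
  obtain h1 where h1: "h1 \<in> Hom X Y B" "Cmp X g h1 = t" using mg Y t' homD g unfolding D_epic_def by metis
  obtain h2 where h2: "h2 \<in> Hom X Y A" "Cmp X f h2 = h1" using mf Y h1 homD f unfolding D_epic_def by metis
  have "Cmp X (Cmp X g f) h2 = t" using assoc[OF h2(1) f g] h1 h2 by simp
  thus "\<exists>h\<in>Hom X Y (Dom X (Cmp X g f)). Cmp X (Cmp X g f) h = t" using h2 homD gf by metis
qed

lemma I_monic: "d \<in> IExt X D C A \<Longrightarrow> Rlz X C A d x y \<Longrightarrow> D_monic X D x"
  using IExt_iff monic_iff IExt_obj by metis
lemma P_epic: "d \<in> PExt X D C A \<Longrightarrow> Rlz X C A d x y \<Longrightarrow> D_epic X D y"
  using PExt_iff epic_iff PExt_obj by metis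

end

context extri begin

lemma et4x: "Rlz X D A d f f' \<Longrightarrow> Rlz X F B d' g g' \<Longrightarrow> Cod X f = B \<Longrightarrow>
        (\<exists>E\<in>Ob X. \<exists>h'\<in>Hom X (Cod X g) E. \<exists>dd\<in>Hom X D E. \<exists>e\<in>Hom X E F. \<exists>d''\<in>Ext X E A.
           Rlz X E A d'' (Cmp X g f) h' \<and>
           Cmp X h' g = Cmp X dd f' \<and> Cmp X e h' = g' \<and>
           Rlz X F D (Push X F f' d') dd e \<and>
           Pull X dd A d'' = d \<and>
           Push X E f d'' = Pull X e B d')"
  using ext unfolding extriangulated_def ET4_def by blast

lemma et4opx: "Rlz X A D d f' f \<Longrightarrow> Rlz X B F d' g' g \<Longrightarrow> Dom X f = B \<Longrightarrow>
        (\<exists>E\<in>Ob X. \<exists>h'\<in>Hom X E (Dom X g). \<exists>dd\<in>Hom X E D. \<exists>e\<in>Hom X F E. \<exists>d''\<in>Ext X A E.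
           Rlz X A E d'' h' (Cmp X f g) \<and>
           Cmp X g h' = Cmp X f' dd \<and> Cmp X h' e = g' \<and>
           Rlz X D F (Pull X f' F d') e dd \<and>
           Push X A dd d'' = d \<and>
           Pull X f E d'' = Push X B e d')"
  using ext unfolding extriangulated_def ET4op_def by blast

lemma et4_restr:
  assumes H: "\<And>A B D' F' d d' f f' g g' E h' dd e d''. d \<in> G D' A \<Longrightarrow> Rlz X D' A d f f' \<Longrightarrow>
     d' \<in> G F' B \<Longrightarrow> Rlz X F' B d' g g' \<Longrightarrow> Cod X f = B \<Longrightarrow> E \<in> Ob X \<Longrightarrow>
     h' \<in> Hom X (Cod X g) E \<Longrightarrow> dd \<in> Hom X D' E \<Longrightarrow> e \<in> Hom X E F' \<Longrightarrow> d'' \<in> Ext X E A \<Longrightarrow>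
     Rlz X E A d'' (Cmp X g f) h' \<Longrightarrow> Cmp X h' g = Cmp X dd f' \<Longrightarrow> Cmp X e h' = g' \<Longrightarrow>
     Rlz X F' D' (Push X F' f' d') dd e \<Longrightarrow> d'' \<in> G E A \<and> Push X F' f' d' \<in> G F' D'"
  shows "ET4 (restr X G)"
  unfolding ET4_def restr_simps restr_Hom
  apply (intro allI impI)
  subgoal for A B D' F' d d' f f' g g'
  proof -
    assume r1: "d \<in> G D' A \<and> Rlz X D' A d f f'" and r2: "d' \<in> G F' B \<and> Rlz X F' B d' g g'"
      and c: "Cod X f = B"
    obtain E h' dd e d'' where o: "E \<in> Ob X" "h' \<in> Hom X (Cod X g) E" "dd \<in> Hom X D' E" "e \<in> Hom X E F'"
      "d'' \<in> Ext X E A" "Rlz X E A d'' (Cmp X g f) h'" "Cmp X h' g = Cmp X dd f'" "Cmp X e h' = g'"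
      "Rlz X F' D' (Push X F' f' d') dd e" "Pull X dd A d'' = d" "Push X E f d'' = Pull X e B d'"
      using et4x[OF conjunct2[OF r1] conjunct2[OF r2] c] by blast
    have m: "d'' \<in> G E A \<and> Push X F' f' d' \<in> G F' D'"
      using H[OF conjunct1[OF r1] conjunct2[OF r1] conjunct1[OF r2] conjunct2[OF r2] c o(1-9)] .
    show ?thesis using o m by blast
  qed
  done

lemma et4op_restr:
  assumes H: "\<And>A B D' F' d d' f f' g g' E h' dd e d''. d \<in> G A D' \<Longrightarrow> Rlz X A D' d f' f \<Longrightarrow>
     d' \<in> G B F' \<Longrightarrow> Rlz X B F' d' g' g \<Longrightarrow> Dom X f = B \<Longrightarrow> E \<in> Ob X \<Longrightarrow>
     h' \<in> Hom X E (Dom X g) \<Longrightarrow> dd \<in> Hom X E D' \<Longrightarrow> e \<in> Hom X F' E \<Longrightarrow> d'' \<in> Ext X A E \<Longrightarrow>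
     Rlz X A E d'' h' (Cmp X f g) \<Longrightarrow> Cmp X g h' = Cmp X f' dd \<Longrightarrow> Cmp X h' e = g' \<Longrightarrow>
     Rlz X D' F' (Pull X f' F' d') e dd \<Longrightarrow> d'' \<in> G A E \<and> Pull X f' F' d' \<in> G D' F'"
  shows "ET4op (restr X G)"
  unfolding ET4op_def restr_simps restr_Hom
  apply (intro allI impI)
  subgoal for A B D' F' d d' f f' g g'
  proof -
    assume r1: "d \<in> G A D' \<and> Rlz X A D' d f' f" and r2: "d' \<in> G B F' \<and> Rlz X B F' d' g' g"
      and c: "Dom X f = B"
    obtain E h' dd e d'' where o: "E \<in> Ob X" "h' \<in> Hom X E (Dom X g)" "dd \<in> Hom X E D'" "e \<in> Hom X F' E"
      "d'' \<in> Ext X A E" "Rlz X A E d'' h' (Cmp X f g)" "Cmp X g h' = Cmp X f' dd" "Cmp X h' e = g'"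
      "Rlz X D' F' (Pull X f' F' d') e dd" "Push X A dd d'' = d" "Pull X f E d'' = Push X B e d'"
      using et4opx[OF conjunct2[OF r1] conjunct2[OF r2] c] by blast
    have m: "d'' \<in> G A E \<and> Pull X f' F' d' \<in> G D' F'"
      using H[OF conjunct1[OF r1] conjunct2[OF r1] conjunct1[OF r2] conjunct2[OF r2] c o(1-9)] .
    show ?thesis using o m by blast
  qed
  done


lemma I4: assumes d: "d \<in> IExt X D D' A" and r1: "Rlz X D' A d f f'"
  and d': "d' \<in> IExt X D F' B" and r2: "Rlz X F' B d' g g'" and c: "Cod X f = B"
  and dd: "d'' \<in> Ext X E A" and r: "Rlz X E A d'' (Cmp X g f) h'"
  shows "d'' \<in> IExt X D E A"
proof -
  have f: "f \<in> Hom X A B" using rlz_hom[OF r1] c by simp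
  have g: "g \<in> Hom X B (Cod X g)" using rlz_hom[OF r2] by simp
  have "D_monic X D (Cmp X g f)" using monic_comp[OF f g I_monic[OF d r1] I_monic[OF d' r2]] .
  thus ?thesis unfolding IExt_def using dd r by blast
qed

lemma P4op: assumes d: "d \<in> PExt X D A D'" and r1: "Rlz X A D' d f' f"
  and d': "d' \<in> PExt X D B F'" and r2: "Rlz X B F' d' g' g" and c: "Dom X f = B"
  and dd: "d'' \<in> Ext X A E" and r: "Rlz X A E d'' h' (Cmp X f g)"
  shows "d'' \<in> PExt X D A E"
proof -
  have f0: "f \<in> Hom X (Cod X f') A" "Cod X f' = Dom X f" using rlz_hom[OF r1] rlzD[OF r1] by auto
  have f: "f \<in> Hom X B A" using f0 c by simp
  have g: "g \<in> Hom X (Cod X g') B" using rlz_hom[OF r2] by simp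
  have "D_epic X D (Cmp X f g)" using epic_comp[OF g f P_epic[OF d' r2] P_epic[OF d r1]] .
  thus ?thesis unfolding PExt_def using dd r by blast
qed

lemma P4: assumes d: "d \<in> PExt X D D' A" and r1: "Rlz X D' A d f f'"
  and d': "d' \<in> PExt X D F' B" and r2: "Rlz X F' B d' g g'" and c: "Cod X f = B"
  and h': "h' \<in> Hom X (Cod X g) E" and dd: "dd \<in> Hom X D' E" and e: "e \<in> Hom X E F'"
  and d'': "d'' \<in> Ext X E A" and r: "Rlz X E A d'' (Cmp X g f) h'"
  and c1: "Cmp X h' g = Cmp X dd f'" and c2: "Cmp X e h' = g'"
  and r3: "Rlz X F' D' (Push X F' f' d') dd e"
  shows "d'' \<in> PExt X D E A"
proof -
  have f': "f' \<in> Hom X B D'" using rlz_hom[OF r1] c by simp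
  have g': "g' \<in> Hom X (Cod X g) F'" and g: "g \<in> Hom X B (Cod X g)" using rlz_hom[OF r2] by auto
  have epf': "D_epic X D f'" using P_epic[OF d r1] .
  have epg': "D_epic X D g'" using P_epic[OF d' r2] .
  have cdd: "Cod X dd = E" using homD[OF dd] by blast
  have "D_epic X D h'" unfolding D_epic_def
  proof (intro ballI)
    fix Y t assume Y: "Y \<in> D" and t0: "t \<in> Hom X Y (Cod X h')"
    have t: "t \<in> Hom X Y E" using t0 homD[OF h'] by simp
    have et: "Cmp X e t \<in> Hom X Y F'" using comp[OF t e] .
    obtain s where s: "s \<in> Hom X Y (Cod X g)" "Cmp X g' s = Cmp X e t"
      using epg' Y et homD[OF g'] unfolding D_epic_def by metis
    define m where "m = Cmp X h' s"
    have m: "m \<in> Hom X Y E" unfolding m_def using comp[OF s(1) h'] .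
    have em: "Cmp X e m = Cmp X e t" unfolding m_def using assoc[OF s(1) h' e] c2 s(2) by simp
    define t' where "t' = Madd X (Mneg X m) t"
    have t': "t' \<in> Hom X Y E" unfolding t'_def using madd_hom[OF mneg_hom[OF m] t] .
    have et': "Cmp X e t' = Mzero X Y F'" unfolding t'_def using post_zero[OF e m t em] .
    obtain u where u: "u \<in> Hom X Y D'" "Cmp X dd u = t'"
      using weak_kernel[OF r3, of t' Y] t' cdd et' by auto
    obtain v where v: "v \<in> Hom X Y B" "Cmp X f' v = u"
      using epf' Y u(1) homD[OF f'] unfolding D_epic_def by metis
    have gv: "Cmp X g v \<in> Hom X Y (Cod X g)" using comp[OF v(1) g] .
    have "t' = Cmp X h' (Cmp X g v)"
      using u(2) v(2) assoc[OF v(1) f' dd] assoc[OF v(1) g h'] c1 by simp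
    hence "Cmp X h' (Madd X s (Cmp X g v)) = t"
      using distr[OF s(1) gv h'] m_def mneg_cancel[OF m t] t'_def by simp
    moreover have "Madd X s (Cmp X g v) \<in> Hom X Y (Dom X h')" using madd_hom[OF s(1) gv] homD[OF h'] by simp
    ultimately show "\<exists>k\<in>Hom X Y (Dom X h'). Cmp X h' k = t" by blast
  qed
  thus ?thesis unfolding PExt_def using d'' r by blast
qed

lemma I4op: assumes d: "d \<in> IExt X D A D'" and r1: "Rlz X A D' d f' f"
  and d': "d' \<in> IExt X D B F'" and r2: "Rlz X B F' d' g' g" and c: "Dom X f = B"
  and h': "h' \<in> Hom X E (Dom X g)" and dd: "dd \<in> Hom X E D'" and e: "e \<in> Hom X F' E"
  and d'': "d'' \<in> Ext X A E" and r: "Rlz X A E d'' h' (Cmp X f g)"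
  and c1: "Cmp X g h' = Cmp X f' dd" and c2: "Cmp X h' e = g'"
  and r3: "Rlz X D' F' (Pull X f' F' d') e dd"
  shows "d'' \<in> IExt X D A E"
proof -
  have cf': "Cod X f' = B" using rlzD[OF r1] c by simp
  have f': "f' \<in> Hom X D' B" using rlz_hom[OF r1] cf' by simp
  have cg': "Cod X g' = Dom X g" using rlzD[OF r2] by simp
  have g': "g' \<in> Hom X F' (Dom X g)" and g: "g \<in> Hom X (Dom X g) B" using rlz_hom[OF r2] cg' by auto
  have mf': "D_monic X D f'" using I_monic[OF d r1] .
  have mg': "D_monic X D g'" using I_monic[OF d' r2] .
  have ce: "Cod X e = E" using homD[OF e] by blast
  have "D_monic X D h'" unfolding D_monic_def
  proof (intro ballI)
    fix Y t assume Y: "Y \<in> D" and t0: "t \<in> Hom X (Dom X h') Y"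
    have t: "t \<in> Hom X E Y" using t0 homD[OF h'] by simp
    have te: "Cmp X t e \<in> Hom X F' Y" using comp[OF e t] .
    obtain s where s: "s \<in> Hom X (Dom X g) Y" "Cmp X s g' = Cmp X t e"
      using mg' Y te homD[OF g'] unfolding D_monic_def by metis
    define m where "m = Cmp X s h'"
    have m: "m \<in> Hom X E Y" unfolding m_def using comp[OF h' s(1)] .
    have me: "Cmp X m e = Cmp X t e" unfolding m_def using assoc[OF e h' s(1)] c2 s(2) by simp
    define t' where "t' = Madd X (Mneg X m) t"
    have t': "t' \<in> Hom X E Y" unfolding t'_def using madd_hom[OF mneg_hom[OF m] t] .
    have et': "Cmp X t' e = Mzero X F' Y" unfolding t'_def using pre_zero[OF e m t me] .
    obtain u where u: "u \<in> Hom X D' Y" "Cmp X u dd = t'"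
      using weak_cokernel[OF r3, of t' Y] t' ce et' by auto
    obtain v where v: "v \<in> Hom X B Y" "Cmp X v f' = u"
      using mf' Y u(1) homD[OF f'] unfolding D_monic_def by metis
    have vg: "Cmp X v g \<in> Hom X (Dom X g) Y" using comp[OF g v(1)] .
    have "t' = Cmp X (Cmp X v g) h'"
      using u(2) v(2) assoc[OF dd f' v(1)] assoc[OF h' g v(1)] c1 by simp
    hence "Cmp X (Madd X s (Cmp X v g)) h' = t"
      using distl[OF h' s(1) vg] m_def mneg_cancel[OF m t] t'_def by simp
    moreover have "Madd X s (Cmp X v g) \<in> Hom X (Cod X h') Y" using madd_hom[OF s(1) vg] homD[OF h'] by simp
    ultimately show "\<exists>k\<in>Hom X (Cod X h') Y. Cmp X k h' = t" by blast
  qed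
  thus ?thesis unfolding IExt_def using d'' r by blast
qed


lemma I4f: "d \<in> IExt X D D' A \<Longrightarrow> Rlz X D' A d f f' \<Longrightarrow>
     d' \<in> IExt X D F' B \<Longrightarrow> Rlz X F' B d' g g' \<Longrightarrow> Cod X f = B \<Longrightarrow> E \<in> Ob X \<Longrightarrow>
     h' \<in> Hom X (Cod X g) E \<Longrightarrow> dd \<in> Hom X D' E \<Longrightarrow> e \<in> Hom X E F' \<Longrightarrow> d'' \<in> Ext X E A \<Longrightarrow>
     Rlz X E A d'' (Cmp X g f) h' \<Longrightarrow> Cmp X h' g = Cmp X dd f' \<Longrightarrow> Cmp X e h' = g' \<Longrightarrow>
     Rlz X F' D' (Push X F' f' d') dd e \<Longrightarrow> d'' \<in> IExt X D E A \<and> Push X F' f' d' \<in> IExt X D F' D'"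
proof -
  assume a: "d \<in> IExt X D D' A" "Rlz X D' A d f f'" "d' \<in> IExt X D F' B" "Rlz X F' B d' g g'" "Cod X f = B"
     "d'' \<in> Ext X E A" "Rlz X E A d'' (Cmp X g f) h'"
  have f': "f' \<in> Hom X B D'" using rlz_hom[OF a(2)] a(5) by simp
  show ?thesis using I4[OF a] I_push[OF f' a(3)] by blast
qed

lemma P4f: "d \<in> PExt X D D' A \<Longrightarrow> Rlz X D' A d f f' \<Longrightarrow>
     d' \<in> PExt X D F' B \<Longrightarrow> Rlz X F' B d' g g' \<Longrightarrow> Cod X f = B \<Longrightarrow> E \<in> Ob X \<Longrightarrow>
     h' \<in> Hom X (Cod X g) E \<Longrightarrow> dd \<in> Hom X D' E \<Longrightarrow> e \<in> Hom X E F' \<Longrightarrow> d'' \<in> Ext X E A \<Longrightarrow>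
     Rlz X E A d'' (Cmp X g f) h' \<Longrightarrow> Cmp X h' g = Cmp X dd f' \<Longrightarrow> Cmp X e h' = g' \<Longrightarrow>
     Rlz X F' D' (Push X F' f' d') dd e \<Longrightarrow> d'' \<in> PExt X D E A \<and> Push X F' f' d' \<in> PExt X D F' D'"
proof -
  assume a: "d \<in> PExt X D D' A" "Rlz X D' A d f f'" "d' \<in> PExt X D F' B" "Rlz X F' B d' g g'" "Cod X f = B"
     "E \<in> Ob X" "h' \<in> Hom X (Cod X g) E" "dd \<in> Hom X D' E" "e \<in> Hom X E F'" "d'' \<in> Ext X E A"
     "Rlz X E A d'' (Cmp X g f) h'" "Cmp X h' g = Cmp X dd f'" "Cmp X e h' = g'"
     "Rlz X F' D' (Push X F' f' d') dd e"
  have f': "f' \<in> Hom X B D'" using rlz_hom[OF a(2)] a(5) by simp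
  show ?thesis using P4[OF a(1-5) a(7-14)] P_push[OF f' a(3)] by blast
qed

lemma D4f: "d \<in> DExt X D D' A \<Longrightarrow> Rlz X D' A d f f' \<Longrightarrow>
     d' \<in> DExt X D F' B \<Longrightarrow> Rlz X F' B d' g g' \<Longrightarrow> Cod X f = B \<Longrightarrow> E \<in> Ob X \<Longrightarrow>
     h' \<in> Hom X (Cod X g) E \<Longrightarrow> dd \<in> Hom X D' E \<Longrightarrow> e \<in> Hom X E F' \<Longrightarrow> d'' \<in> Ext X E A \<Longrightarrow>
     Rlz X E A d'' (Cmp X g f) h' \<Longrightarrow> Cmp X h' g = Cmp X dd f' \<Longrightarrow> Cmp X e h' = g' \<Longrightarrow>
     Rlz X F' D' (Push X F' f' d') dd e \<Longrightarrow> d'' \<in> DExt X D E A \<and> Push X F' f' d' \<in> DExt X D F' D'"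
proof -
  assume a: "d \<in> DExt X D D' A" "Rlz X D' A d f f'" "d' \<in> DExt X D F' B" "Rlz X F' B d' g g'" "Cod X f = B"
     "E \<in> Ob X" "h' \<in> Hom X (Cod X g) E" "dd \<in> Hom X D' E" "e \<in> Hom X E F'" "d'' \<in> Ext X E A"
     "Rlz X E A d'' (Cmp X g f) h'" "Cmp X h' g = Cmp X dd f'" "Cmp X e h' = g'"
     "Rlz X F' D' (Push X F' f' d') dd e"
  have i: "d \<in> IExt X D D' A" "d' \<in> IExt X D F' B" and p: "d \<in> PExt X D D' A" "d' \<in> PExt X D F' B"
    using a(1,3) unfolding DExt_def by auto
  show ?thesis using I4f[OF i(1) a(2) i(2) a(4-14)] P4f[OF p(1) a(2) p(2) a(4-14)] unfolding DExt_def by blast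
qed

lemma I4opf: "d \<in> IExt X D A D' \<Longrightarrow> Rlz X A D' d f' f \<Longrightarrow>
     d' \<in> IExt X D B F' \<Longrightarrow> Rlz X B F' d' g' g \<Longrightarrow> Dom X f = B \<Longrightarrow> E \<in> Ob X \<Longrightarrow>
     h' \<in> Hom X E (Dom X g) \<Longrightarrow> dd \<in> Hom X E D' \<Longrightarrow> e \<in> Hom X F' E \<Longrightarrow> d'' \<in> Ext X A E \<Longrightarrow>
     Rlz X A E d'' h' (Cmp X f g) \<Longrightarrow> Cmp X g h' = Cmp X f' dd \<Longrightarrow> Cmp X h' e = g' \<Longrightarrow>
     Rlz X D' F' (Pull X f' F' d') e dd \<Longrightarrow> d'' \<in> IExt X D A E \<and> Pull X f' F' d' \<in> IExt X D D' F'"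
proof -
  assume a: "d \<in> IExt X D A D'" "Rlz X A D' d f' f" "d' \<in> IExt X D B F'" "Rlz X B F' d' g' g" "Dom X f = B"
     "E \<in> Ob X" "h' \<in> Hom X E (Dom X g)" "dd \<in> Hom X E D'" "e \<in> Hom X F' E" "d'' \<in> Ext X A E"
     "Rlz X A E d'' h' (Cmp X f g)" "Cmp X g h' = Cmp X f' dd" "Cmp X h' e = g'"
     "Rlz X D' F' (Pull X f' F' d') e dd"
  have f': "f' \<in> Hom X D' B" using rlz_hom[OF a(2)] rlzD[OF a(2)] a(5) by simp
  show ?thesis using I4op[OF a(1-5) a(7-14)] I_pull[OF f' a(3)] by blast
qed

lemma P4opf: "d \<in> PExt X D A D' \<Longrightarrow> Rlz X A D' d f' f \<Longrightarrow>
     d' \<in> PExt X D B F' \<Longrightarrow> Rlz X B F' d' g' g \<Longrightarrow> Dom X f = B \<Longrightarrow> E \<in> Ob X \<Longrightarrow>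
     h' \<in> Hom X E (Dom X g) \<Longrightarrow> dd \<in> Hom X E D' \<Longrightarrow> e \<in> Hom X F' E \<Longrightarrow> d'' \<in> Ext X A E \<Longrightarrow>
     Rlz X A E d'' h' (Cmp X f g) \<Longrightarrow> Cmp X g h' = Cmp X f' dd \<Longrightarrow> Cmp X h' e = g' \<Longrightarrow>
     Rlz X D' F' (Pull X f' F' d') e dd \<Longrightarrow> d'' \<in> PExt X D A E \<and> Pull X f' F' d' \<in> PExt X D D' F'"
proof -
  assume a: "d \<in> PExt X D A D'" "Rlz X A D' d f' f" "d' \<in> PExt X D B F'" "Rlz X B F' d' g' g" "Dom X f = B"
     "d'' \<in> Ext X A E" "Rlz X A E d'' h' (Cmp X f g)"
  have f': "f' \<in> Hom X D' B" using rlz_hom[OF a(2)] rlzD[OF a(2)] a(5) by simp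
  show ?thesis using P4op[OF a] P_pull[OF f' a(3)] by blast
qed

lemma D4opf: "d \<in> DExt X D A D' \<Longrightarrow> Rlz X A D' d f' f \<Longrightarrow>
     d' \<in> DExt X D B F' \<Longrightarrow> Rlz X B F' d' g' g \<Longrightarrow> Dom X f = B \<Longrightarrow> E \<in> Ob X \<Longrightarrow>
     h' \<in> Hom X E (Dom X g) \<Longrightarrow> dd \<in> Hom X E D' \<Longrightarrow> e \<in> Hom X F' E \<Longrightarrow> d'' \<in> Ext X A E \<Longrightarrow>
     Rlz X A E d'' h' (Cmp X f g) \<Longrightarrow> Cmp X g h' = Cmp X f' dd \<Longrightarrow> Cmp X h' e = g' \<Longrightarrow>
     Rlz X D' F' (Pull X f' F' d') e dd \<Longrightarrow> d'' \<in> DExt X D A E \<and> Pull X f' F' d' \<in> DExt X D D' F'"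
proof -
  assume a: "d \<in> DExt X D A D'" "Rlz X A D' d f' f" "d' \<in> DExt X D B F'" "Rlz X B F' d' g' g" "Dom X f = B"
     "E \<in> Ob X" "h' \<in> Hom X E (Dom X g)" "dd \<in> Hom X E D'" "e \<in> Hom X F' E" "d'' \<in> Ext X A E"
     "Rlz X A E d'' h' (Cmp X f g)" "Cmp X g h' = Cmp X f' dd" "Cmp X h' e = g'"
     "Rlz X D' F' (Pull X f' F' d') e dd"
  have i: "d \<in> IExt X D A D'" "d' \<in> IExt X D B F'" and p: "d \<in> PExt X D A D'" "d' \<in> PExt X D B F'"
    using a(1,3) unfolding DExt_def by auto
  show ?thesis using I4opf[OF i(1) a(2) i(2) a(4-14)] P4opf[OF p(1) a(2) p(2) a(4-14)] unfolding DExt_def by blast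
qed

lemma IExt_ET: "extriangulated (restr X (IExt X D))"
proof (rule restr_extri)
  show "\<And>C A. IExt X D C A \<subseteq> Ext X C A" using IExt_obj by blast
  show "\<And>C A. C \<in> Ob X \<Longrightarrow> A \<in> Ob X \<Longrightarrow> Ezero X C A \<in> IExt X D C A" by (rule I_zero)
  show "\<And>C A d d'. d \<in> IExt X D C A \<Longrightarrow> d' \<in> IExt X D C A \<Longrightarrow> Eadd X C A d d' \<in> IExt X D C A"
    by (rule I_add)
  show "\<And>C A d. d \<in> IExt X D C A \<Longrightarrow> Eneg X C A d \<in> IExt X D C A" by (rule I_neg)
  show "\<And>C C' A c d. c \<in> Hom X C' C \<Longrightarrow> d \<in> IExt X D C A \<Longrightarrow> Pull X c A d \<in> IExt X D C' A"
    by (rule I_pull)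
  show "\<And>C A A' a d. a \<in> Hom X A A' \<Longrightarrow> d \<in> IExt X D C A \<Longrightarrow> Push X C a d \<in> IExt X D C A'"
    by (rule I_push)
  show "ET4 (restr X (IExt X D))" by (rule et4_restr[OF I4f])
  show "ET4op (restr X (IExt X D))" by (rule et4op_restr[OF I4opf])
qed

lemma PExt_ET: "extriangulated (restr X (PExt X D))"
proof (rule restr_extri)
  show "\<And>C A. PExt X D C A \<subseteq> Ext X C A" using PExt_obj by blast
  show "\<And>C A. C \<in> Ob X \<Longrightarrow> A \<in> Ob X \<Longrightarrow> Ezero X C A \<in> PExt X D C A" by (rule P_zero)
  show "\<And>C A d d'. d \<in> PExt X D C A \<Longrightarrow> d' \<in> PExt X D C A \<Longrightarrow> Eadd X C A d d' \<in> PExt X D C A"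
    by (rule P_add)
  show "\<And>C A d. d \<in> PExt X D C A \<Longrightarrow> Eneg X C A d \<in> PExt X D C A" by (rule P_neg)
  show "\<And>C C' A c d. c \<in> Hom X C' C \<Longrightarrow> d \<in> PExt X D C A \<Longrightarrow> Pull X c A d \<in> PExt X D C' A"
    by (rule P_pull)
  show "\<And>C A A' a d. a \<in> Hom X A A' \<Longrightarrow> d \<in> PExt X D C A \<Longrightarrow> Push X C a d \<in> PExt X D C A'"
    by (rule P_push)
  show "ET4 (restr X (PExt X D))" by (rule et4_restr[OF P4f])
  show "ET4op (restr X (PExt X D))" by (rule et4op_restr[OF P4opf])
qed

lemma DExt_ET: "extriangulated (restr X (DExt X D))"
proof (rule restr_extri)
  show "\<And>C A. DExt X D C A \<subseteq> Ext X C A" using IExt_obj unfolding DExt_def by blast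
  show "\<And>C A. C \<in> Ob X \<Longrightarrow> A \<in> Ob X \<Longrightarrow> Ezero X C A \<in> DExt X D C A" using I_zero P_zero unfolding DExt_def by blast
  show "\<And>C A d d'. d \<in> DExt X D C A \<Longrightarrow> d' \<in> DExt X D C A \<Longrightarrow> Eadd X C A d d' \<in> DExt X D C A"
    using I_add P_add unfolding DExt_def by blast
  show "\<And>C A d. d \<in> DExt X D C A \<Longrightarrow> Eneg X C A d \<in> DExt X D C A"
    using I_neg P_neg unfolding DExt_def by blast
  show "\<And>C C' A c d. c \<in> Hom X C' C \<Longrightarrow> d \<in> DExt X D C A \<Longrightarrow> Pull X c A d \<in> DExt X D C' A"
    using I_pull P_pull unfolding DExt_def by blast
  show "\<And>C A A' a d. a \<in> Hom X A A' \<Longrightarrow> d \<in> DExt X D C A \<Longrightarrow> Push X C a d \<in> DExt X D C A'"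
    using I_push P_push unfolding DExt_def by blast
  show "ET4 (restr X (DExt X D))" by (rule et4_restr[OF D4f])
  show "ET4op (restr X (DExt X D))" by (rule et4op_restr[OF D4opf])
qed


lemma D_Inj: assumes "D \<subseteq> Ob X" shows "D \<subseteq> Inj X (IExt X D)"
proof
  fix I assume I: "I \<in> D"
  have Io: "I \<in> Ob X" using I assms by blast
  have "\<forall>C\<in>Ob X. IExt X D C I = {Ezero X C I}"
  proof
    fix C assume C: "C \<in> Ob X"
    show "IExt X D C I = {Ezero X C I}"
    proof
      show "{Ezero X C I} \<subseteq> IExt X D C I" using I_zero[OF C Io] by blast
      show "IExt X D C I \<subseteq> {Ezero X C I}"
      proof
        fix d assume d: "d \<in> IExt X D C I"
        have "d \<in> Ext X C I" "Push X C (Idm X I) d = Ezero X C I"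
          using IExt_iff[OF C Io] d I idm[OF Io] by auto
        thus "d \<in> {Ezero X C I}" using push_id[OF C Io] by simp
      qed
    qed
  qed
  thus "I \<in> Inj X (IExt X D)" unfolding Inj_def using Io by blast
qed

lemma D_Proj: assumes "D \<subseteq> Ob X" shows "D \<subseteq> Proj X (PExt X D)"
proof
  fix P assume P: "P \<in> D"
  have Po: "P \<in> Ob X" using P assms by blast
  have "\<forall>A\<in>Ob X. PExt X D P A = {Ezero X P A}"
  proof
    fix A assume A: "A \<in> Ob X"
    show "PExt X D P A = {Ezero X P A}"
    proof
      show "{Ezero X P A} \<subseteq> PExt X D P A" using P_zero[OF Po A] by blast
      show "PExt X D P A \<subseteq> {Ezero X P A}"
      proof
        fix d assume d: "d \<in> PExt X D P A"
        have "d \<in> Ext X P A" "Pull X (Idm X P) A d = Ezero X P A"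
          using PExt_iff[OF Po A] d P idm[OF Po] by auto
        thus "d \<in> {Ezero X P A}" using pull_id[OF Po A] by simp
      qed
    qed
  qed
  thus "P \<in> Proj X (PExt X D)" unfolding Proj_def using Po by blast
qed

lemma Inj_sub: "Inj X (IExt X D) \<subseteq> Inj X (DExt X D)"
  unfolding Inj_def DExt_def using I_zero P_zero by blast

lemma Proj_sub: "Proj X (PExt X D) \<subseteq> Proj X (DExt X D)"
  unfolding Proj_def DExt_def using I_zero P_zero by blast

lemma bip_iso: assumes bp: "biproduct X A1 A2 S i1 i2 p1 p2" and b: "b \<in> Hom X S T" and b': "b' \<in> Hom X T S"
  and e1: "Cmp X b' b = Idm X S" and e2: "Cmp X b b' = Idm X T"
  shows "biproduct X A1 A2 T (Cmp X b i1) (Cmp X b i2) (Cmp X p1 b') (Cmp X p2 b')"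
proof -
  have h: "i1 \<in> Hom X A1 S" "i2 \<in> Hom X A2 S" "p1 \<in> Hom X S A1" "p2 \<in> Hom X S A2"
    and q: "Cmp X p1 i1 = Idm X A1" "Cmp X p2 i2 = Idm X A2" "Cmp X p1 i2 = Mzero X A2 A1"
      "Cmp X p2 i1 = Mzero X A1 A2" "Madd X (Cmp X i1 p1) (Cmp X i2 p2) = Idm X S"
    using bp unfolding biproduct_def by auto
  have k: "\<And>i p A B. i \<in> Hom X A S \<Longrightarrow> p \<in> Hom X S B \<Longrightarrow> Cmp X (Cmp X p b') (Cmp X b i) = Cmp X p i"
  proof -
    fix i p A B assume i: "i \<in> Hom X A S" and p: "p \<in> Hom X S B"
    have "Cmp X (Cmp X p b') (Cmp X b i) = Cmp X p (Cmp X b' (Cmp X b i))"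
      using assoc[OF comp[OF i b] b' p] by simp
    also have "\<dots> = Cmp X p (Cmp X (Cmp X b' b) i)" using assoc[OF i b b'] by simp
    also have "\<dots> = Cmp X p i" using e1 idl[OF i] by simp
    finally show "Cmp X (Cmp X p b') (Cmp X b i) = Cmp X p i" .
  qed
  have k2: "\<And>i p A B. i \<in> Hom X A S \<Longrightarrow> p \<in> Hom X S A \<Longrightarrow> Cmp X (Cmp X b i) (Cmp X p b') = Cmp X b (Cmp X (Cmp X i p) b')"
  proof -
    fix i p A assume i: "i \<in> Hom X A S" and p: "p \<in> Hom X S A"
    have "Cmp X (Cmp X b i) (Cmp X p b') = Cmp X b (Cmp X i (Cmp X p b'))"
      using assoc[OF comp[OF b' p] i b] by simp
    also have "\<dots> = Cmp X b (Cmp X (Cmp X i p) b')" using assoc[OF b' p i] by simp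
    finally show "Cmp X (Cmp X b i) (Cmp X p b') = Cmp X b (Cmp X (Cmp X i p) b')" .
  qed
  have u1: "Cmp X i1 p1 \<in> Hom X S S" "Cmp X i2 p2 \<in> Hom X S S" using comp h by auto
  have "Madd X (Cmp X (Cmp X b i1) (Cmp X p1 b')) (Cmp X (Cmp X b i2) (Cmp X p2 b'))
      = Madd X (Cmp X b (Cmp X (Cmp X i1 p1) b')) (Cmp X b (Cmp X (Cmp X i2 p2) b'))"
    using k2[OF h(1,3)] k2[OF h(2,4)] by simp
  also have "\<dots> = Cmp X b (Madd X (Cmp X (Cmp X i1 p1) b') (Cmp X (Cmp X i2 p2) b'))"
    using distr[OF comp[OF b' u1(1)] comp[OF b' u1(2)] b] by simp
  also have "\<dots> = Cmp X b (Cmp X (Madd X (Cmp X i1 p1) (Cmp X i2 p2)) b')"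
    using distl[OF b' u1] by simp
  also have "\<dots> = Idm X T" using q(5) idl[OF b'] e2 by simp
  finally have s: "Madd X (Cmp X (Cmp X b i1) (Cmp X p1 b')) (Cmp X (Cmp X b i2) (Cmp X p2 b')) = Idm X T" .
  show ?thesis unfolding biproduct_def
    using comp[OF h(1) b] comp[OF h(2) b] comp[OF b' h(3)] comp[OF b' h(4)]
      k[OF h(1,3)] k[OF h(2,4)] k[OF h(2,3)] k[OF h(1,4)] q s by simp
qed

lemma bip_swap: "biproduct X A1 A2 S i1 i2 p1 p2 \<Longrightarrow> biproduct X A2 A1 S i2 i1 p2 p1"
  unfolding biproduct_def using madd_comm comp by metis

lemma inj_summand: assumes cs: "closed_under_summands X D" and f: "f \<in> Hom X I D0" and D0: "D0 \<in> D"
  and r: "Rlz X C I (Ezero X C I) f y" shows "I \<in> D"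
proof -
  have o: "C \<in> Ob X" "I \<in> Ob X" using rlzD[OF r] by auto
  obtain S i1 i2 p1 p2 where bp: "biproduct X I C S i1 i2 p1 p2"
    using ext o unfolding extriangulated_def is_additive_def by blast
  have r0: "Rlz X C I (Ezero X C I) i1 p2" using rlz_split[OF bp o(2,1)] .
  have "seq_equiv X i1 p2 f y" using rlz_equiv[OF r0] r by blast
  then obtain b where b: "b \<in> Hom X (Cod X i1) (Cod X f)" "iso X b" "Cmp X b i1 = f"
    unfolding seq_equiv_def by blast
  have ci: "Cod X i1 = S" using bp homD unfolding biproduct_def by blast
  have cf: "Cod X f = D0" using homD[OF f] by blast
  have b1: "b \<in> Hom X S D0" using b(1) ci cf by simp
  obtain b' where b': "b' \<in> Hom X D0 S" "Cmp X b' b = Idm X S" "Cmp X b b' = Idm X D0"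
    using b(2) homD[OF b1] unfolding iso_def by metis
  have "biproduct X I C D0 (Cmp X b i1) (Cmp X b i2) (Cmp X p1 b') (Cmp X p2 b')"
    using bip_iso[OF bp b1 b'] .
  thus ?thesis using cs D0 unfolding closed_under_summands_def by blast
qed

lemma proj_summand: assumes cs: "closed_under_summands X D" and g: "g \<in> Hom X D0 P" and D0: "D0 \<in> D"
  and r: "Rlz X P A (Ezero X P A) x g" shows "P \<in> D"
proof -
  have o: "P \<in> Ob X" "A \<in> Ob X" using rlzD[OF r] by auto
  obtain S i1 i2 p1 p2 where bp: "biproduct X A P S i1 i2 p1 p2"
    using ext o unfolding extriangulated_def is_additive_def by blast
  have r0: "Rlz X P A (Ezero X P A) i1 p2" using rlz_split[OF bp o(2,1)] .
  have "seq_equiv X i1 p2 x g" using rlz_equiv[OF r0] r by blast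
  then obtain b where b: "b \<in> Hom X (Cod X i1) (Cod X x)" "iso X b"
    unfolding seq_equiv_def by blast
  have ci: "Cod X i1 = S" using bp homD unfolding biproduct_def by blast
  have cf: "Cod X x = D0" using rlzD[OF r] homD[OF g] by metis
  have b1: "b \<in> Hom X S D0" using b(1) ci cf by simp
  obtain b' where b': "b' \<in> Hom X D0 S" "Cmp X b' b = Idm X S" "Cmp X b b' = Idm X D0"
    using b(2) homD[OF b1] unfolding iso_def by metis
  have "biproduct X A P D0 (Cmp X b i1) (Cmp X b i2) (Cmp X p1 b') (Cmp X p2 b')"
    using bip_iso[OF bp b1 b'] .
  hence "biproduct X P A D0 (Cmp X b i2) (Cmp X b i1) (Cmp X p2 b') (Cmp X p1 b')" by (rule bip_swap)
  thus ?thesis using cs D0 unfolding closed_under_summands_def by blast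
qed

lemma inj_gen:
  assumes inF: "\<And>C A d f y. left_approx X D A f \<Longrightarrow> Rlz X C A d f y \<Longrightarrow> d \<in> F C A"
  and DI: "D \<subseteq> Inj X F" and cs: "closed_under_summands X D" and cf: "covariantly_finite X D"
  and infl: "\<forall>A f. left_approx X D A f \<longrightarrow> inflation X f"
  shows "D = Inj X F \<and> enough_inj X F"
proof -
  have la: "\<And>A. A \<in> Ob X \<Longrightarrow> \<exists>f C d y. left_approx X D A f \<and> Rlz X C A d f y"
  proof -
    fix A assume A: "A \<in> Ob X"
    obtain f where f: "left_approx X D A f" using cf A unfolding covariantly_finite_def by blast
    obtain C A' d y where r: "Rlz X C A' d f y" using infl f unfolding inflation_def by blast
    have "A' = A" using rlzD[OF r] f unfolding left_approx_def by simp
    thus "\<exists>f C d y. left_approx X D A f \<and> Rlz X C A d f y" using f r by blast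
  qed
  have "Inj X F \<subseteq> D"
  proof
    fix I assume I: "I \<in> Inj X F"
    have Io: "I \<in> Ob X" using I unfolding Inj_def by blast
    obtain f C d y where f: "left_approx X D I f" and r: "Rlz X C I d f y" using la[OF Io] by blast
    have Co: "C \<in> Ob X" using rlzD[OF r] by blast
    have "d \<in> F C I" using inF[OF f r] .
    hence "d = Ezero X C I" using I Co unfolding Inj_def by blast
    moreover have "f \<in> Hom X I (Cod X f)" using rlz_hom[OF r] by blast
    ultimately show "I \<in> D" using inj_summand[OF cs] r f unfolding left_approx_def by blast
  qed
  moreover have "enough_inj X F" unfolding enough_inj_def
  proof
    fix A assume A: "A \<in> Ob X"
    obtain f C d y where f: "left_approx X D A f" and r: "Rlz X C A d f y" using la[OF A] by blast
    have "Cod X f \<in> Inj X F" using f DI unfolding left_approx_def by blast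
    thus "\<exists>C d x y. d \<in> F C A \<and> Rlz X C A d x y \<and> Cod X x \<in> Inj X F" using inF[OF f r] r by blast
  qed
  ultimately show ?thesis using DI by blast
qed

lemma proj_gen:
  assumes inF: "\<And>C A d x g. right_approx X D C g \<Longrightarrow> Rlz X C A d x g \<Longrightarrow> d \<in> F C A"
  and DP: "D \<subseteq> Proj X F" and cs: "closed_under_summands X D" and cf: "contravariantly_finite X D"
  and defl: "\<forall>C g. right_approx X D C g \<longrightarrow> deflation X g"
  shows "D = Proj X F \<and> enough_proj X F"
proof -
  have ra: "\<And>C. C \<in> Ob X \<Longrightarrow> \<exists>g A d x. right_approx X D C g \<and> Rlz X C A d x g"
  proof -
    fix C assume C: "C \<in> Ob X"
    obtain g where g: "right_approx X D C g" using cf C unfolding contravariantly_finite_def by blast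
    obtain C' A d x where r: "Rlz X C' A d x g" using defl g unfolding deflation_def by blast
    have "C' = C" using rlzD[OF r] g unfolding right_approx_def by simp
    thus "\<exists>g A d x. right_approx X D C g \<and> Rlz X C A d x g" using g r by blast
  qed
  have "Proj X F \<subseteq> D"
  proof
    fix P assume P: "P \<in> Proj X F"
    have Po: "P \<in> Ob X" using P unfolding Proj_def by blast
    obtain g A d x where g: "right_approx X D P g" and r: "Rlz X P A d x g" using ra[OF Po] by blast
    have Ao: "A \<in> Ob X" using rlzD[OF r] by blast
    have "d \<in> F P A" using inF[OF g r] .
    hence "d = Ezero X P A" using P Ao unfolding Proj_def by blast
    moreover have "g \<in> Hom X (Dom X g) P" using g homI unfolding right_approx_def by metis
    ultimately show "P \<in> D" using proj_summand[OF cs] r g unfolding right_approx_def by blast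
  qed
  moreover have "enough_proj X F" unfolding enough_proj_def
  proof
    fix C assume C: "C \<in> Ob X"
    obtain g A d x where g: "right_approx X D C g" and r: "Rlz X C A d x g" using ra[OF C] by blast
    have "Dom X g \<in> Proj X F" using g DP unfolding right_approx_def by blast
    thus "\<exists>A d x y. d \<in> F C A \<and> Rlz X C A d x y \<and> Dom X y \<in> Proj X F" using inF[OF g r] r by blast
  qed
  ultimately show ?thesis using DP by blast
qed

end

theorem mainTheorem7:
  fixes X :: "('o,'m,'e) extcat" and D :: "'o set" and idx :: "'i itself"
  assumes "extriangulated X" and "idem_complete X" and "D \<subseteq> Ob X"
  shows "external_triangulation X (IExt X D) \<and>
         external_triangulation X (PExt X D) \<and>
         external_triangulation X (DExt X D) \<and>
         D \<subseteq> Inj X (IExt X D) \<and> Inj X (IExt X D) \<subseteq> Inj X (DExt X D) \<and>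
         D \<subseteq> Proj X (PExt X D) \<and> Proj X (PExt X D) \<subseteq> Proj X (DExt X D) \<and>
         (closed_under_sums idx X D \<and> closed_under_summands X D \<longrightarrow>
           ((covariantly_finite X D \<and> (\<forall>A f. left_approx X D A f \<longrightarrow> inflation X f)
              \<longrightarrow> D = Inj X (IExt X D) \<and> enough_inj X (IExt X D)) \<and>
            (contravariantly_finite X D \<and> (\<forall>C f. right_approx X D C f \<longrightarrow> deflation X f)
              \<longrightarrow> D = Proj X (PExt X D) \<and> enough_proj X (PExt X D)) \<and>
            (functorially_finite X D \<and>
             (\<forall>A f. left_approx X D A f \<longrightarrow> inflation X f) \<and>
             (\<forall>C f. right_approx X D C f \<longrightarrow> deflation X f) \<and>
             (\<forall>A f C d y. left_approx X D A f \<longrightarrow> Rlz X C A d f y \<longrightarrow> D_epic X D y) \<and>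
             (\<forall>C g A d x. right_approx X D C g \<longrightarrow> Rlz X C A d x g \<longrightarrow> D_monic X D x)
              \<longrightarrow> D = Inj X (DExt X D) \<and> D = Proj X (DExt X D) \<and>
                  enough_inj X (DExt X D) \<and> enough_proj X (DExt X D))))"
proof -
  interpret extri X using assms(1) by (unfold_locales)
  have DOb: "D \<subseteq> Ob X" by (rule assms(3))
  have DI: "D \<subseteq> Inj X (IExt X D)" using D_Inj[OF DOb] .
  have DP: "D \<subseteq> Proj X (PExt X D)" using D_Proj[OF DOb] .
  have DI2: "D \<subseteq> Inj X (DExt X D)" using DI Inj_sub by blast
  have DP2: "D \<subseteq> Proj X (DExt X D)" using DP Proj_sub by blast
  have inI: "\<And>C A d f y. left_approx X D A f \<Longrightarrow> Rlz X C A d f y \<Longrightarrow> d \<in> IExt X D C A"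
    unfolding IExt_def left_approx_def using rlzD by blast
  have inP: "\<And>C A d x g. right_approx X D C g \<Longrightarrow> Rlz X C A d x g \<Longrightarrow> d \<in> PExt X D C A"
    unfolding PExt_def right_approx_def using rlzD by blast
  have part3: "functorially_finite X D \<and>
             (\<forall>A f. left_approx X D A f \<longrightarrow> inflation X f) \<and>
             (\<forall>C f. right_approx X D C f \<longrightarrow> deflation X f) \<and>
             (\<forall>A f C d y. left_approx X D A f \<longrightarrow> Rlz X C A d f y \<longrightarrow> D_epic X D y) \<and>
             (\<forall>C g A d x. right_approx X D C g \<longrightarrow> Rlz X C A d x g \<longrightarrow> D_monic X D x)
              \<longrightarrow> D = Inj X (DExt X D) \<and> D = Proj X (DExt X D) \<and>
                  enough_inj X (DExt X D) \<and> enough_proj X (DExt X D)"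
    if cs: "closed_under_summands X D"
  proof
    assume h: "functorially_finite X D \<and>
             (\<forall>A f. left_approx X D A f \<longrightarrow> inflation X f) \<and>
             (\<forall>C f. right_approx X D C f \<longrightarrow> deflation X f) \<and>
             (\<forall>A f C d y. left_approx X D A f \<longrightarrow> Rlz X C A d f y \<longrightarrow> D_epic X D y) \<and>
             (\<forall>C g A d x. right_approx X D C g \<longrightarrow> Rlz X C A d x g \<longrightarrow> D_monic X D x)"
    have inD1: "\<And>C A d f y. left_approx X D A f \<Longrightarrow> Rlz X C A d f y \<Longrightarrow> d \<in> DExt X D C A"
    proof -
      fix C A d f y assume l: "left_approx X D A f" and r: "Rlz X C A d f y"
      have "D_epic X D y" using h l r by blast
      thus "d \<in> DExt X D C A" using inI[OF l r] r rlzD[OF r] unfolding DExt_def PExt_def by blast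
    qed
    have inD2: "\<And>C A d x g. right_approx X D C g \<Longrightarrow> Rlz X C A d x g \<Longrightarrow> d \<in> DExt X D C A"
    proof -
      fix C A d x g assume l: "right_approx X D C g" and r: "Rlz X C A d x g"
      have "D_monic X D x" using h l r by blast
      thus "d \<in> DExt X D C A" using inP[OF l r] r rlzD[OF r] unfolding DExt_def IExt_def by blast
    qed
    have ff: "covariantly_finite X D" "contravariantly_finite X D"
      and ia: "\<forall>A f. left_approx X D A f \<longrightarrow> inflation X f"
      and da: "\<forall>C f. right_approx X D C f \<longrightarrow> deflation X f"
      using h unfolding functorially_finite_def by auto
    have a: "D = Inj X (DExt X D) \<and> enough_inj X (DExt X D)"
      by (rule inj_gen[where F="DExt X D"]) (fact inD1 DI2 cs ff(1) ia)+
    have b: "D = Proj X (DExt X D) \<and> enough_proj X (DExt X D)"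
      by (rule proj_gen[where F="DExt X D"]) (fact inD2 DP2 cs ff(2) da)+
    show "D = Inj X (DExt X D) \<and> D = Proj X (DExt X D) \<and>
                  enough_inj X (DExt X D) \<and> enough_proj X (DExt X D)" using a b by blast
  qed
  have pa: "closed_under_summands X D \<Longrightarrow> covariantly_finite X D \<Longrightarrow> (\<forall>A f. left_approx X D A f \<longrightarrow> inflation X f)
     \<Longrightarrow> D = Inj X (IExt X D) \<and> enough_inj X (IExt X D)"
    by (rule inj_gen[where F="IExt X D"]) (use inI DI in blast)+
  have pb: "closed_under_summands X D \<Longrightarrow> contravariantly_finite X D \<Longrightarrow> (\<forall>C f. right_approx X D C f \<longrightarrow> deflation X f)
     \<Longrightarrow> D = Proj X (PExt X D) \<and> enough_proj X (PExt X D)"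
    by (rule proj_gen[where F="PExt X D"]) (use inP DP in blast)+
  show ?thesis
    unfolding external_triangulation_def
    using IExt_ET PExt_ET DExt_ET DI Inj_sub DP Proj_sub pa pb part3 by blast
qed

end
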